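(* Let $V$ be the Volterra operator on $L_2[0,1]$, $Vf(t)=\int_0^tf(s)\,ds$, and let $c>0$. Then for every $f\in L_2[0,1]$, $$\lim_{n\to\infty}\|(I-cV)^nf\|=0\quad\text{and}\quad\lim_{n\to\infty}\|(I+cV)^{-n}f\|=0.$$ *)

theory Defs
  imports "HOL-Analysis.Analysis"
begin

text \<open>Complex L_2[0,1], with elements represented by functions real => complex
  (values outside [0,1] are irrelevant).\<close>

definition L2_01 :: "(real \<Rightarrow> complex) set" where
  "L2_01 = {f. f \<in> borel_measurable (lebesgue_on {0..1}) \<and>
              integrable (lebesgue_on {0..1}) (\<lambda>t. (cmod (f t))^2)}"

definition L2_norm :: "(real \<Rightarrow> complex) \<Rightarrow> real" where
  "L2_norm f = sqrt (integral\<^sup>L (lebesgue_on {0..1}) (\<lambda>t. (cmod (f t))^2))"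

definition volterra :: "(real \<Rightarrow> complex) \<Rightarrow> real \<Rightarrow> complex" where
  "volterra f t = integral\<^sup>L (lebesgue_on {0..t}) f"

definition I_minus_cV :: "real \<Rightarrow> (real \<Rightarrow> complex) \<Rightarrow> real \<Rightarrow> complex" where
  "I_minus_cV c f = (\<lambda>t. f t - complex_of_real c * volterra f t)"

definition I_plus_cV_inv :: "real \<Rightarrow> (real \<Rightarrow> complex) \<Rightarrow> real \<Rightarrow> complex" where
  "I_plus_cV_inv c f = (SOME g. g \<in> L2_01 \<and>
      (AE t in lebesgue_on {0..1}. g t + complex_of_real c * volterra g t = f t))"

end

theory Submission
  imports Defs
begin

abbreviation "M \<equiv> lebesgue_on {0..1::real}"

lemma meas_id[measurable]: "(\<lambda>x::real. x) \<in> borel_measurable (lebesgue_on S)"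
  by (intro measurable_restrict_space1 measurable_completion) simp

lemma measure_M_space[simp]: "measure M {0..1} = 1"
  by (simp add: measure_restrict_space)

lemma fin_M: "finite_measure M"
  by (simp add: finite_measure_lebesgue_on)

lemma integrable_const_M[simp]: "integrable M (\<lambda>x. c::real)"
  using finite_measure.integrable_const[OF fin_M] .

lemma integral_const_M[simp]: "(\<integral>x. (c::real) \<partial>M) = c"
  by (simp add: measure_restrict_space)

definition W :: "real \<Rightarrow> (real \<Rightarrow> complex) \<Rightarrow> real" where
  "W s f = (\<integral>t. exp (-2 * s * t) * (cmod (f t))^2 \<partial>M)"

definition m1 :: "(real \<Rightarrow> complex) \<Rightarrow> real" where
  "m1 f = (\<integral>t. cmod (f t) \<partial>M)"

lemma W0: "W 0 f = (\<integral>t. (cmod (f t))^2 \<partial>M)"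
  by (simp add: W_def)

lemma L2_norm_W0: "L2_norm f = sqrt (W 0 f)"
  by (simp add: L2_norm_def W0)

lemma L2_01I: "f \<in> borel_measurable M \<Longrightarrow> integrable M (\<lambda>t. (cmod (f t))^2) \<Longrightarrow> f \<in> L2_01"
  by (simp add: L2_01_def)

lemma L2_meas: "f \<in> L2_01 \<Longrightarrow> f \<in> borel_measurable M"
  by (simp add: L2_01_def)

lemma L2_sq_int: "f \<in> L2_01 \<Longrightarrow> integrable M (\<lambda>t. (cmod (f t))^2)"
  by (simp add: L2_01_def)

lemma L2_integrable: assumes "f \<in> L2_01" shows "integrable M f"
proof (rule Bochner_Integration.integrable_bound)
  show "integrable M (\<lambda>t. 1 + (cmod (f t))^2)"
    using L2_sq_int[OF assms] by simp
  show "f \<in> borel_measurable M" using L2_meas[OF assms] .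
  show "AE x in M. norm (f x) \<le> norm (1 + (cmod (f x))\<^sup>2)"
  proof (rule AE_I2)
    fix x
    have h: "0 \<le> (cmod (f x) - 1)^2" by simp
    have "cmod (f x) \<le> 1 + (cmod (f x))^2"
    proof -
      have "2 * cmod (f x) \<le> 1 + (cmod (f x))^2"
        using h by (simp add: power2_eq_square algebra_simps)
      then show ?thesis using norm_ge_zero[of "f x"] by linarith
    qed
    then show "norm (f x) \<le> norm (1 + (cmod (f x))\<^sup>2)" by simp
  qed
qed

lemma L2_norm_int: "f \<in> L2_01 \<Longrightarrow> integrable M (\<lambda>t. cmod (f t))"
  using L2_integrable integrable_norm by blast

lemma sq_add_le: "(cmod (x + y))^2 \<le> (1+a) * (cmod x)^2 + (1 + 1/a) * (cmod y)^2" if "a > 0"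
proof -
  have "(cmod (x + y))^2 \<le> (cmod x + cmod y)^2"
    by (simp add: norm_triangle_ineq power_mono)
  also have "\<dots> \<le> (1+a) * (cmod x)^2 + (1 + 1/a) * (cmod y)^2"
  proof -
    have "0 \<le> (a * cmod x - cmod y)^2 / a" using that by simp
    also have "\<dots> = a * (cmod x)^2 - 2 * cmod x * cmod y + (cmod y)^2 / a"
      using that by (simp add: power2_eq_square field_simps)
    finally show ?thesis by (simp add: power2_eq_square field_simps)
  qed
  finally show ?thesis .
qed

lemma L2_add: assumes "f \<in> L2_01" "g \<in> L2_01" shows "(\<lambda>t. f t + g t) \<in> L2_01"
proof (rule L2_01I)
  show "(\<lambda>t. f t + g t) \<in> borel_measurable M" using L2_meas[OF assms(1)] L2_meas[OF assms(2)] by measurable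
  show "integrable M (\<lambda>t. (cmod (f t + g t))\<^sup>2)"
  proof (rule Bochner_Integration.integrable_bound)
    show "integrable M (\<lambda>t. 2 * (cmod (f t))^2 + 2 * (cmod (g t))^2)"
      using L2_sq_int[OF assms(1)] L2_sq_int[OF assms(2)] by simp
    show "(\<lambda>t. (cmod (f t + g t))\<^sup>2) \<in> borel_measurable M"
      using L2_meas[OF assms(1)] L2_meas[OF assms(2)] by measurable
    show "AE x in M. norm ((cmod (f x + g x))\<^sup>2) \<le> norm (2 * (cmod (f x))\<^sup>2 + 2 * (cmod (g x))\<^sup>2)"
      using sq_add_le[of 1 "f _" "g _"] by (intro AE_I2) simp
  qed
qed

lemma L2_scale: assumes "f \<in> L2_01" shows "(\<lambda>t. a * f t) \<in> L2_01"
proof (rule L2_01I)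
  show "(\<lambda>t. a * f t) \<in> borel_measurable M" using L2_meas[OF assms] by measurable
  have "integrable M (\<lambda>t. (cmod a)^2 * (cmod (f t))\<^sup>2)" using L2_sq_int[OF assms] by simp
  then show "integrable M (\<lambda>t. (cmod (a * f t))\<^sup>2)" by (simp add: norm_mult power_mult_distrib)
qed

lemma L2_minus: assumes "f \<in> L2_01" shows "(\<lambda>t. - f t) \<in> L2_01"
  using L2_scale[OF assms, of "-1"] by simp

lemma L2_diff: assumes "f \<in> L2_01" "g \<in> L2_01" shows "(\<lambda>t. f t - g t) \<in> L2_01"
  using L2_add[OF assms(1) L2_minus[OF assms(2)]] by simp

lemma L2_zero: "(\<lambda>t. 0) \<in> L2_01"
  by (rule L2_01I) auto

lemma L2_bounded: assumes "f \<in> borel_measurable M" "\<And>t. t \<in> {0..1} \<Longrightarrow> cmod (f t) \<le> K"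
  shows "f \<in> L2_01"
proof (rule L2_01I)
  show "f \<in> borel_measurable M" by fact
  show "integrable M (\<lambda>t. (cmod (f t))\<^sup>2)"
  proof (rule Bochner_Integration.integrable_bound)
    show "integrable M (\<lambda>t. K^2)" by simp
    show "(\<lambda>t. (cmod (f t))\<^sup>2) \<in> borel_measurable M" using assms(1) by measurable
    show "AE x in M. norm ((cmod (f x))\<^sup>2) \<le> norm (K^2)"
      using assms(2) by (intro AE_I') (auto intro!: power_mono simp: abs_le_square_iff)
  qed
qed

lemma weight_int: assumes "f \<in> L2_01" shows "integrable M (\<lambda>t. exp (-2 * s * t) * (cmod (f t))^2)"
proof (rule Bochner_Integration.integrable_bound)
  show "integrable M (\<lambda>t. exp (2 * \<bar>s\<bar>) * (cmod (f t))^2)" using L2_sq_int[OF assms] by simp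
  show "(\<lambda>t. exp (-2 * s * t) * (cmod (f t))^2) \<in> borel_measurable M" using L2_meas[OF assms] by measurable
  show "AE x in M. norm (exp (-2 * s * x) * (cmod (f x))^2) \<le> norm (exp (2 * \<bar>s\<bar>) * (cmod (f x))^2)"
  proof (rule AE_I2)
    fix x assume "x \<in> space M"
    then have x: "0 \<le> x" "x \<le> 1" by auto
    have "- s * x \<le> \<bar>s\<bar> * x" using x by (intro mult_right_mono) auto
    moreover have "\<bar>s\<bar> * x \<le> \<bar>s\<bar>" using x by (simp add: mult_left_le)
    ultimately have "-2 * s * x \<le> 2 * \<bar>s\<bar>" by linarith
    then show "norm (exp (-2 * s * x) * (cmod (f x))^2) \<le> norm (exp (2 * \<bar>s\<bar>) * (cmod (f x))^2)"
      by (simp add: abs_mult mult_right_mono)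
  qed
qed

lemma W_nonneg: "0 \<le> W s f"
  unfolding W_def by (intro integral_nonneg_AE AE_I2) simp

lemma W_cong: "(\<And>t. t \<in> {0..1} \<Longrightarrow> f t = g t) \<Longrightarrow> W s f = W s g"
  unfolding W_def by (rule Bochner_Integration.integral_cong) auto

lemma W_cong_AE: "f \<in> borel_measurable M \<Longrightarrow> g \<in> borel_measurable M \<Longrightarrow> AE t in M. f t = g t \<Longrightarrow> W s f = W s g"
  unfolding W_def by (intro integral_cong_AE) (auto elim: AE_mp)

lemma W_scale: "W s (\<lambda>t. a * f t) = (cmod a)^2 * W s f"
  unfolding W_def by (simp add: norm_mult power_mult_distrib mult.left_commute)

lemma W_add_le: assumes "f \<in> L2_01" "g \<in> L2_01" "a > 0"
  shows "W s (\<lambda>t. f t + g t) \<le> (1+a) * W s f + (1+1/a) * W s g"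
proof -
  have "W s (\<lambda>t. f t + g t) \<le> (\<integral>t. (1+a) * (exp (-2 * s * t) * (cmod (f t))^2) + (1+1/a) * (exp (-2 * s * t) * (cmod (g t))^2) \<partial>M)"
    unfolding W_def
  proof (rule integral_mono)
    show "integrable M (\<lambda>t. exp (-2 * s * t) * (cmod (f t + g t))^2)" using weight_int[OF L2_add[OF assms(1,2)]] .
    show "integrable M (\<lambda>t. (1+a) * (exp (-2 * s * t) * (cmod (f t))^2) + (1+1/a) * (exp (-2 * s * t) * (cmod (g t))^2))"
      using weight_int[OF assms(1)] weight_int[OF assms(2)] by simp
    fix t
    have "exp (-2 * s * t) * (cmod (f t + g t))^2 \<le> exp (-2 * s * t) * ((1+a) * (cmod (f t))^2 + (1 + 1/a) * (cmod (g t))^2)"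
      using sq_add_le[OF assms(3)] by (intro mult_left_mono) auto
    then show "exp (-2 * s * t) * (cmod (f t + g t))^2 \<le> (1+a) * (exp (-2 * s * t) * (cmod (f t))^2) + (1+1/a) * (exp (-2 * s * t) * (cmod (g t))^2)"
      by (simp add: algebra_simps)
  qed
  also have "\<dots> = (1+a) * W s f + (1+1/a) * W s g"
    unfolding W_def using weight_int[OF assms(1)] weight_int[OF assms(2)] by simp
  finally show ?thesis .
qed

lemma W_add_le2: assumes "f \<in> L2_01" "g \<in> L2_01"
  shows "W s (\<lambda>t. f t + g t) \<le> 2 * W s f + 2 * W s g"
  using W_add_le[OF assms, of 1 s] by simp

lemma W_mono_weight: assumes "f \<in> L2_01" "s \<ge> 0" shows "W s f \<le> W 0 f"
  unfolding W_def
proof (rule integral_mono)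
  show "integrable M (\<lambda>t. exp (-2 * s * t) * (cmod (f t))^2)" using weight_int[OF assms(1)] .
  show "integrable M (\<lambda>t. exp (-2 * 0 * t) * (cmod (f t))^2)" using weight_int[OF assms(1)] .
  fix t assume "t \<in> space M" then have "t \<ge> 0" by simp
  then have "exp (-2 * s * t) \<le> 1" using assms(2) by simp
  then show "exp (-2 * s * t) * (cmod (f t))^2 \<le> exp (-2 * 0 * t) * (cmod (f t))^2"
    by (simp add: mult_left_le_one_le)
qed

lemma W0_le_W: assumes "f \<in> L2_01" "s \<ge> 0" shows "W 0 f \<le> exp (2 * s) * W s f"
proof -
  have "W 0 f \<le> (\<integral>t. exp (2 * s) * (exp (-2 * s * t) * (cmod (f t))^2) \<partial>M)"
    unfolding W_def
  proof (rule integral_mono)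
    show "integrable M (\<lambda>t. exp (-2 * 0 * t) * (cmod (f t))^2)" using weight_int[OF assms(1)] .
    show "integrable M (\<lambda>t. exp (2 * s) * (exp (-2 * s * t) * (cmod (f t))^2))" using weight_int[OF assms(1)] by simp
    fix t assume "t \<in> space M" then have "t \<le> 1" by simp
    then have "1 \<le> exp (2 * s) * exp (-2 * s * t)" using assms(2)
      by (simp add: exp_add[symmetric] mult_left_le)
    then show "exp (-2 * 0 * t) * (cmod (f t))^2 \<le> exp (2 * s) * (exp (-2 * s * t) * (cmod (f t))^2)"
    proof -
      have "1 * (cmod (f t))^2 \<le> (exp (2 * s) * exp (-2 * s * t)) * (cmod (f t))^2"
        using \<open>1 \<le> exp (2 * s) * exp (-2 * s * t)\<close> by (intro mult_right_mono) auto
      then show ?thesis by (simp add: mult.assoc)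
    qed
  qed
  also have "\<dots> = exp (2 * s) * W s f" unfolding W_def by simp
  finally show ?thesis .
qed

lemma sub_integrable: "integrable M (f::real\<Rightarrow>'a::euclidean_space) \<Longrightarrow> t \<le> 1 \<Longrightarrow> integrable (lebesgue_on {0..t}) f"
  by (rule integrable_subinterval) auto

lemma volterra_add: "integrable M (f::real\<Rightarrow>complex) \<Longrightarrow> integrable M g \<Longrightarrow> t \<le> 1 \<Longrightarrow>
   volterra (\<lambda>x. f x + g x) t = volterra f t + volterra g t"
  unfolding volterra_def by (rule Bochner_Integration.integral_add; rule sub_integrable; assumption)

lemma volterra_diff: "integrable M (f::real\<Rightarrow>complex) \<Longrightarrow> integrable M g \<Longrightarrow> t \<le> 1 \<Longrightarrow>
   volterra (\<lambda>x. f x - g x) t = volterra f t - volterra g t"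
  unfolding volterra_def by (rule Bochner_Integration.integral_diff; rule sub_integrable; assumption)

lemma volterra_scale: "volterra (\<lambda>x. a * f x) t = a * volterra f t"
  unfolding volterra_def by (rule integral_mult_right_zero)

lemma volterra_cong: "(\<And>x. x \<in> {0..t} \<Longrightarrow> f x = g x) \<Longrightarrow> volterra f t = volterra g t"
  unfolding volterra_def by (rule Bochner_Integration.integral_cong) auto

lemma volterra_zero[simp]: "volterra (\<lambda>x. 0) t = 0"
  unfolding volterra_def by simp

lemma int_sub_le:
  fixes h :: "real \<Rightarrow> real"
  assumes "integrable M h" "\<And>x. 0 \<le> h x" "t \<le> 1"
  shows "integral\<^sup>L (lebesgue_on {0..t}) h \<le> integral\<^sup>L M h"
proof -
  have e1: "integral\<^sup>L (lebesgue_on {0..t}) h = (\<integral>x. indicator {0..t} x *\<^sub>R h x \<partial>lebesgue)"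
    by (rule integral_restrict_space) simp
  have e2: "integral\<^sup>L M h = (\<integral>x. indicator {0..1} x *\<^sub>R h x \<partial>lebesgue)"
    by (rule integral_restrict_space) simp
  have i1: "integrable lebesgue (\<lambda>x. indicator {0..t} x *\<^sub>R h x)"
    using sub_integrable[OF assms(1,3)] by (subst integrable_restrict_space[symmetric]) auto
  have i2: "integrable lebesgue (\<lambda>x. indicator {0..1} x *\<^sub>R h x)"
    using assms(1) by (subst integrable_restrict_space[symmetric]) auto
  have "(\<integral>x. indicator {0..t} x *\<^sub>R h x \<partial>lebesgue) \<le> (\<integral>x. indicator {0..1} x *\<^sub>R h x \<partial>lebesgue)"
    using i1 i2
  proof (rule integral_mono)
    fix x show "indicator {0..t} x *\<^sub>R h x \<le> indicator {0..1} x *\<^sub>R h x"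
      using assms(2)[of x] assms(3) by (auto simp: indicator_def)
  qed
  then show ?thesis using e1 e2 by simp
qed

lemma m1_nonneg: "0 \<le> m1 f"
  unfolding m1_def by simp

lemma volterra_norm_le: assumes "integrable M f" "t \<le> 1" shows "cmod (volterra f t) \<le> m1 f"
proof -
  have "cmod (volterra f t) \<le> integral\<^sup>L (lebesgue_on {0..t}) (\<lambda>x. cmod (f x))"
    unfolding volterra_def by (rule integral_norm_bound)
  also have "\<dots> \<le> m1 f" unfolding m1_def
    using assms by (intro int_sub_le integrable_norm) auto
  finally show ?thesis .
qed

lemma m1_sq_le: assumes "f \<in> L2_01" shows "(m1 f)^2 \<le> W 0 f"
proof -
  define m where "m = m1 f"
  have i1: "integrable M (\<lambda>t. (cmod (f t))^2)" using L2_sq_int[OF assms] .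
  have i2: "integrable M (\<lambda>t. cmod (f t))" using L2_norm_int[OF assms] .
  have "0 \<le> (\<integral>t. (cmod (f t) - m)^2 \<partial>M)" by simp
  also have "(\<integral>t. (cmod (f t) - m)^2 \<partial>M) = (\<integral>t. (cmod (f t))^2 - 2 * m * cmod (f t) + m^2 \<partial>M)"
    by (rule Bochner_Integration.integral_cong) (auto simp: power2_diff)
  also have "\<dots> = (\<integral>t. (cmod (f t))^2 \<partial>M) - 2 * m * (\<integral>t. cmod (f t) \<partial>M) + m^2"
    using i1 i2 by simp
  also have "\<dots> = W 0 f - m^2" unfolding W0 m_def m1_def by (simp add: power2_eq_square)
  finally show ?thesis unfolding m_def by simp
qed

lemma m1_le_sqrt: assumes "f \<in> L2_01" shows "m1 f \<le> sqrt (W 0 f)"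
  by (rule real_le_rsqrt[OF m1_sq_le[OF assms]])

lemma volterra_eq: "volterra f = (\<lambda>x. integral\<^sup>L (lebesgue_on {0..x}) f)"
  by (rule ext) (simp add: volterra_def)

lemma volterra_cont: "integrable M f \<Longrightarrow> continuous_on {0..1} (volterra f)"
  unfolding volterra_eq by (rule indefinite_integral_continuous_real[of 0 1 f])

lemma volterra_meas: "integrable M f \<Longrightarrow> volterra f \<in> borel_measurable M"
  by (rule continuous_imp_measurable_on_sets_lebesgue[OF volterra_cont]) auto

lemma volterra_L2: assumes "f \<in> L2_01" shows "volterra f \<in> L2_01"
  using L2_integrable[OF assms]
  by (intro L2_bounded[where K = "m1 f"] volterra_meas volterra_norm_le) auto

lemma W_volterra_le: assumes "f \<in> L2_01" "s \<ge> 0" shows "W s (volterra f) \<le> W 0 f"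
proof -
  have "W s (volterra f) \<le> W 0 (volterra f)" using W_mono_weight[OF volterra_L2[OF assms(1)] assms(2)] .
  also have "\<dots> \<le> (\<integral>t. (m1 f)^2 \<partial>M)" unfolding W0
  proof (rule integral_mono)
    show "integrable M (\<lambda>t. (cmod (volterra f t))\<^sup>2)" using L2_sq_int[OF volterra_L2[OF assms(1)]] .
    show "integrable M (\<lambda>t. (m1 f)^2)" by simp
    fix t assume "t \<in> space M"
    then show "(cmod (volterra f t))\<^sup>2 \<le> (m1 f)\<^sup>2"
      using volterra_norm_le[OF L2_integrable[OF assms(1)], of t] by (auto intro: power_mono)
  qed
  also have "\<dots> \<le> W 0 f" using m1_sq_le[OF assms(1)] by simp
  finally show ?thesis .
qed

lemma m1_AE_zero: assumes "integrable M (f::real\<Rightarrow>complex)" "AE x in M. f x = 0" shows "m1 f = 0"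
proof -
  have "m1 f = (\<integral>x. 0 \<partial>M)" unfolding m1_def
    using assms by (intro integral_cong_AE) (auto elim!: AE_mp)
  then show ?thesis by simp
qed

lemma volterra_AE: assumes "integrable M f" "integrable M g" "AE x in M. f x = g x" "t \<le> 1"
  shows "volterra f t = volterra g t"
proof -
  have "cmod (volterra (\<lambda>x. f x - g x) t) \<le> m1 (\<lambda>x. f x - g x)"
    using assms by (intro volterra_norm_le) auto
  also have "\<dots> = 0" using assms by (intro m1_AE_zero) (auto elim!: AE_mp)
  finally show ?thesis using volterra_diff[OF assms(1,2,4)] by simp
qed

lemma cont_integrable_M: "continuous_on {0..1} (g::real\<Rightarrow>'a::euclidean_space) \<Longrightarrow> integrable M g"
  by (rule continuous_imp_integrable_real)

lemma cont_meas_M: "continuous_on {0..1} (g::real\<Rightarrow>'a::euclidean_space) \<Longrightarrow> g \<in> borel_measurable M"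
  by (rule continuous_imp_measurable_on_sets_lebesgue) auto

lemma volterra_HK: assumes "continuous_on {0..1} g" "t \<in> {0..1}"
  shows "volterra g t = integral {0..t} g"
proof -
  have "continuous_on {0..t} g" using assms by (auto intro: continuous_on_subset)
  then have "integrable (lebesgue_on {0..t}) g" by (rule continuous_imp_integrable_real)
  then show ?thesis unfolding volterra_def by (rule lebesgue_integral_eq_integral) simp
qed

lemma volterra_deriv: assumes "continuous_on {0..1} g" "t \<in> {0..1}"
  shows "(volterra g has_vector_derivative g t) (at t within {0..1})"
proof (rule has_vector_derivative_transform[OF assms(2)])
  show "((\<lambda>u. integral {0..u} g) has_vector_derivative g t) (at t within {0..1})"
    by (rule integral_has_vector_derivative[OF assms])
  fix x assume "x \<in> {0..1::real}" then show "volterra g x = integral {0..x} g"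
    using volterra_HK[OF assms(1)] by simp
qed

lemma volterra_0: "continuous_on {0..1} g \<Longrightarrow> volterra g 0 = 0"
  using volterra_HK[of g 0] by simp

lemma EI_cont:
  fixes g :: "real \<Rightarrow> complex"
  assumes cg: "continuous_on {0..1} g"
  shows "(\<integral>t. exp (-2 * s * t) * (2 * Re (g t * cnj (volterra g t))) \<partial>M)
       = exp (-2 * s) * (cmod (volterra g 1))^2 + 2 * s * (\<integral>t. exp (-2 * s * t) * (cmod (volterra g t))^2 \<partial>M)"
proof -
  define G where "G = volterra g"
  have cG: "continuous_on {0..1} G" unfolding G_def by (rule volterra_cont[OF cont_integrable_M[OF cg]])
  define F where "F t = exp (-2 * s * t) *\<^sub>R (G t * cnj (G t))" for t
  define F' where "F' t = exp (-2 * s * t) *\<^sub>R (G t * cnj (g t) + g t * cnj (G t)) + (-2 * s * exp (-2 * s * t)) *\<^sub>R (G t * cnj (G t))" for t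
  have dF: "(F has_vector_derivative F' t) (at t within {0..1})" if t: "t \<in> {0..1}" for t
  proof -
    have d1: "(G has_vector_derivative g t) (at t within {0..1})" unfolding G_def by (rule volterra_deriv[OF cg t])
    have d2: "((\<lambda>x. cnj (G x)) has_vector_derivative cnj (g t)) (at t within {0..1})"
      by (rule has_vector_derivative_cnj[OF d1])
    have d3: "((\<lambda>x. exp (-2 * s * x)) has_field_derivative (-2 * s * exp (-2 * s * t))) (at t within {0..1})"
      by (auto intro!: derivative_eq_intros)
    show ?thesis unfolding F_def F'_def
      using has_vector_derivative_scaleR[OF d3 has_vector_derivative_mult[OF d1 d2]] by simp
  qed
  have hi: "(F' has_integral (F 1 - F 0)) {0..1}"
    by (rule fundamental_theorem_of_calculus) (auto intro: dF)
  have F0: "F 0 = 0" unfolding F_def G_def using volterra_0[OF cg] by simp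
  have cF': "continuous_on {0..1} F'" unfolding F'_def
    using cg cG by (intro continuous_intros) auto
  have "integral\<^sup>L M F' = integral {0..1} F'"
    by (rule lebesgue_integral_eq_integral[OF cont_integrable_M[OF cF']]) simp
  also have "\<dots> = F 1" using hi F0 by (simp add: integral_unique)
  finally have eq: "integral\<^sup>L M F' = F 1" .
  have ReF': "Re (F' t) = exp (-2 * s * t) * (2 * Re (g t * cnj (G t))) - 2 * s * (exp (-2 * s * t) * (cmod (G t))^2)" for t
    unfolding F'_def by (simp add: complex_mult_cnj cmod_power2 algebra_simps)
  have "Re (integral\<^sup>L M F') = (\<integral>t. Re (F' t) \<partial>M)"
    using integral_Re[OF cont_integrable_M[OF cF']] by simp
  also have "\<dots> = (\<integral>t. exp (-2 * s * t) * (2 * Re (g t * cnj (G t))) \<partial>M) - 2 * s * (\<integral>t. exp (-2 * s * t) * (cmod (G t))^2 \<partial>M)"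
  proof -
    have i1: "integrable M (\<lambda>t. exp (-2 * s * t) * (2 * Re (g t * cnj (G t))))"
      using cg cG by (intro cont_integrable_M continuous_intros) auto
    have i2: "integrable M (\<lambda>t. exp (-2 * s * t) * (cmod (G t))^2)"
      using cG by (intro cont_integrable_M continuous_intros) auto
    show ?thesis unfolding ReF' using i1 i2 by simp
  qed
  finally have "(\<integral>t. exp (-2 * s * t) * (2 * Re (g t * cnj (G t))) \<partial>M) = Re (F 1) + 2 * s * (\<integral>t. exp (-2 * s * t) * (cmod (G t))^2 \<partial>M)"
    using eq by simp
  moreover have "Re (F 1) = exp (-2 * s) * (cmod (G 1))^2"
    unfolding F_def by (simp add: complex_mult_cnj cmod_power2)
  ultimately show ?thesis unfolding G_def by simp
qed

definition approx :: "(real \<Rightarrow> complex) \<Rightarrow> bool" where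
  "approx f \<longleftrightarrow> (\<forall>e>0. \<exists>u\<in>L2_01. W 0 (\<lambda>t. f t - volterra u t) < e)"

lemma approxI: "(\<And>e. e > 0 \<Longrightarrow> \<exists>u\<in>L2_01. W 0 (\<lambda>t. f t - volterra u t) < e) \<Longrightarrow> approx f"
  unfolding approx_def by blast

lemma approxD: "approx f \<Longrightarrow> e > 0 \<Longrightarrow> \<exists>u\<in>L2_01. W 0 (\<lambda>t. f t - volterra u t) < e"
  unfolding approx_def by blast

lemma approx_cong: assumes "approx f" "\<And>t. t \<in> {0..1} \<Longrightarrow> f t = g t" shows "approx g"
proof (rule approxI)
  fix e :: real assume "e > 0"
  then obtain u where u: "u \<in> L2_01" "W 0 (\<lambda>t. f t - volterra u t) < e" using approxD[OF assms(1)] by blast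
  have "W 0 (\<lambda>t. g t - volterra u t) = W 0 (\<lambda>t. f t - volterra u t)"
    using assms(2) by (intro W_cong) auto
  then show "\<exists>u\<in>L2_01. W 0 (\<lambda>t. g t - volterra u t) < e" using u by (intro bexI[of _ u]) simp_all
qed

lemma approx_AE: assumes "approx f" "f \<in> borel_measurable M" "g \<in> borel_measurable M" "AE t in M. f t = g t"
  shows "approx g"
proof (rule approxI)
  fix e :: real assume "e > 0"
  then obtain u where u: "u \<in> L2_01" "W 0 (\<lambda>t. f t - volterra u t) < e" using approxD[OF assms(1)] by blast
  have mu: "volterra u \<in> borel_measurable M" using volterra_meas[OF L2_integrable[OF u(1)]] .
  have "W 0 (\<lambda>t. g t - volterra u t) = W 0 (\<lambda>t. f t - volterra u t)"
    using assms(4) mu assms(2,3) by (intro W_cong_AE) (auto elim!: AE_mp)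
  then show "\<exists>u\<in>L2_01. W 0 (\<lambda>t. g t - volterra u t) < e" using u by (intro bexI[of _ u]) simp_all
qed

lemma approx_volterra: "u \<in> L2_01 \<Longrightarrow> approx (volterra u)"
  by (intro approxI) (auto simp: W_def intro!: bexI[of _ u])

lemma approx_zero: "approx (\<lambda>t. 0)"
  using approx_volterra[OF L2_zero] by (rule approx_cong) simp

lemma approx_add: assumes "f \<in> L2_01" "g \<in> L2_01" "approx f" "approx g"
  shows "approx (\<lambda>t. f t + g t)"
proof (rule approxI)
  fix e :: real assume e: "e > 0"
  have e4: "e/4 > 0" using e by simp
  obtain u where u: "u \<in> L2_01" "W 0 (\<lambda>t. f t - volterra u t) < e/4" using approxD[OF assms(3) e4] by blast
  obtain v where v: "v \<in> L2_01" "W 0 (\<lambda>t. g t - volterra v t) < e/4" using approxD[OF assms(4) e4] by blast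
  have "W 0 (\<lambda>t. (f t + g t) - volterra (\<lambda>x. u x + v x) t) = W 0 (\<lambda>t. (f t - volterra u t) + (g t - volterra v t))"
    using L2_integrable[OF u(1)] L2_integrable[OF v(1)] by (intro W_cong) (auto simp: volterra_add)
  also have "\<dots> \<le> 2 * W 0 (\<lambda>t. f t - volterra u t) + 2 * W 0 (\<lambda>t. g t - volterra v t)"
    using assms u v by (intro W_add_le2 L2_diff volterra_L2)
  also have "\<dots> < e" using u v by simp
  finally show "\<exists>w\<in>L2_01. W 0 (\<lambda>t. f t + g t - volterra w t) < e"
    using L2_add[OF u(1) v(1)] by blast
qed

lemma approx_scale: assumes "approx f" shows "approx (\<lambda>t. a * f t)"
proof (rule approxI)
  fix e :: real assume e: "e > 0"
  have "(cmod a)^2 + 1 > 0" by (simp add: add_nonneg_pos)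
  then have ea: "e / ((cmod a)^2 + 1) > 0" using e by (intro divide_pos_pos)
  obtain u where u: "u \<in> L2_01" "W 0 (\<lambda>t. f t - volterra u t) < e / ((cmod a)^2 + 1)"
    using approxD[OF assms ea] by blast
  have "W 0 (\<lambda>t. a * f t - volterra (\<lambda>x. a * u x) t) = W 0 (\<lambda>t. a * (f t - volterra u t))"
    by (simp add: volterra_scale algebra_simps)
  also have "\<dots> = (cmod a)^2 * W 0 (\<lambda>t. f t - volterra u t)" by (rule W_scale)
  also have "\<dots> \<le> ((cmod a)^2 + 1) * W 0 (\<lambda>t. f t - volterra u t)"
    using W_nonneg by (intro mult_right_mono) auto
  also have "\<dots> < e" using u(2) by (simp add: field_simps add_pos_nonneg)
  finally show "\<exists>w\<in>L2_01. W 0 (\<lambda>t. a * f t - volterra w t) < e"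
    using L2_scale[OF u(1)] by blast
qed

lemma approx_lim: assumes "f \<in> L2_01" "\<And>e. e > 0 \<Longrightarrow> \<exists>h\<in>L2_01. approx h \<and> W 0 (\<lambda>t. f t - h t) < e"
  shows "approx f"
proof (rule approxI)
  fix e :: real assume e: "e > 0"
  have e4: "e/4 > 0" using e by simp
  obtain h where h: "h \<in> L2_01" "approx h" "W 0 (\<lambda>t. f t - h t) < e/4" using assms(2)[OF e4] by blast
  obtain u where u: "u \<in> L2_01" "W 0 (\<lambda>t. h t - volterra u t) < e/4" using approxD[OF h(2) e4] by blast
  have "W 0 (\<lambda>t. f t - volterra u t) = W 0 (\<lambda>t. (f t - h t) + (h t - volterra u t))" by simp
  also have "\<dots> \<le> 2 * W 0 (\<lambda>t. f t - h t) + 2 * W 0 (\<lambda>t. h t - volterra u t)"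
    using assms h u by (intro W_add_le2 L2_diff volterra_L2)
  also have "\<dots> < e" using u h by simp
  finally show "\<exists>w\<in>L2_01. W 0 (\<lambda>t. f t - volterra w t) < e" using u(1) by blast
qed

lemma approx_sum: assumes "finite I" "\<And>i. i \<in> I \<Longrightarrow> F i \<in> L2_01" "\<And>i. i \<in> I \<Longrightarrow> approx (F i)"
  shows "approx (\<lambda>t. \<Sum>i\<in>I. F i t) \<and> (\<lambda>t. \<Sum>i\<in>I. F i t) \<in> L2_01"
  using assms
proof (induction I rule: finite_induct)
  case empty
  then show ?case using approx_zero L2_zero by simp
next
  case (insert x I)
  then show ?case by (simp add: approx_add L2_add)
qed

lemma AE_M_neq: "AE x in M. x \<noteq> a"
proof -
  have "AE x in lebesgue. x \<noteq> a" by (rule AE_completion[OF AE_lborel_singleton])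
  then show ?thesis by (subst AE_restrict_space_iff) (auto elim: AE_mp)
qed

lemma volterra_ind: assumes "0 \<le> \<alpha>" "\<delta> > 0"
  shows "volterra (\<lambda>s. complex_of_real (indicator {\<alpha>..\<alpha>+\<delta>} s / \<delta>)) t = of_real (max 0 (min (\<alpha>+\<delta>) t - \<alpha>) / \<delta>)"
proof -
  have "volterra (\<lambda>s. complex_of_real (indicator {\<alpha>..\<alpha>+\<delta>} s / \<delta>)) t
      = of_real (measure (lebesgue_on {0..t}) ({\<alpha>..\<alpha>+\<delta>} \<inter> {0..t}) / \<delta>)"
    unfolding volterra_def by simp
  also have "measure (lebesgue_on {0..t}) ({\<alpha>..\<alpha>+\<delta>} \<inter> {0..t}) = measure lebesgue ({\<alpha>..min (\<alpha>+\<delta>) t})"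
  proof -
    have f1: "{\<alpha>..\<alpha>+\<delta>} \<inter> {0..t} = {\<alpha>..min (\<alpha>+\<delta>) t}"
      by (rule set_eqI) (use assms in \<open>auto simp: min_def\<close>)
    have f2: "measure (lebesgue_on {0..t}) ({\<alpha>..\<alpha>+\<delta>} \<inter> {0..t}) = measure lebesgue ({\<alpha>..\<alpha>+\<delta>} \<inter> {0..t})"
      by (rule measure_restrict_space) auto
    show ?thesis by (subst f2, subst f1, rule refl)
  qed
  also have "\<dots> = max 0 (min (\<alpha>+\<delta>) t - \<alpha>)"
  proof (cases "\<alpha> \<le> min (\<alpha>+\<delta>) t")
    case True then show ?thesis by simp
  next
    case False
    then have "{\<alpha>..min (\<alpha>+\<delta>) t} = {}" by auto
    moreover have "t < \<alpha>" using False assms by auto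
    then have "max 0 (min (\<alpha>+\<delta>) t - \<alpha>) = 0" by (simp add: max_def min_def)
    ultimately show ?thesis by simp
  qed
  finally show ?thesis .
qed

lemma approx_base: "approx (\<lambda>t. complex_of_real (indicator {a<..} t))"
proof (cases "a \<ge> 1")
  case True
  show ?thesis using approx_zero by (rule approx_cong) (use True in auto)
next
  case False
  define a' where "a' = max a 0"
  have a': "0 \<le> a'" "a \<le> a'" "a' < 1" using False by (auto simp: a'_def)
  show ?thesis
  proof (rule approxI)
    fix e :: real assume e: "e > 0"
    define \<delta> where "\<delta> = e / 2"
    have d: "\<delta> > 0" "\<delta> < e" using e by (auto simp: \<delta>_def)
    define u where "u = (\<lambda>s. complex_of_real (indicator {a'..a'+\<delta>} s / \<delta>))"
    have uL2: "u \<in> L2_01" unfolding u_def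
      by (rule L2_bounded[where K = "1/\<delta>"]) (use d in \<open>auto simp: indicator_def norm_divide abs_of_pos\<close>)
    have pw: "(cmod (complex_of_real (indicator {a<..} t) - volterra u t))^2 \<le> indicator {a'..a'+\<delta>} t"
      if t: "t \<in> {0..1}" for t
    proof -
      have Vu: "volterra u t = of_real (max 0 (min (a'+\<delta>) t - a') / \<delta>)"
        unfolding u_def by (rule volterra_ind[OF a'(1) d(1)])
      consider "t < a'" | "a' \<le> t" "t \<le> a'+\<delta>" | "a'+\<delta> < t" by linarith
      then show ?thesis
      proof cases
        case 1
        then have "t < a" using t a' by (auto simp: a'_def)
        then show ?thesis using 1 Vu by (simp add: indicator_def)
      next
        case 2
        have r: "0 \<le> (t - a') / \<delta>" "(t - a') / \<delta> \<le> 1" using 2 d by (auto simp: field_simps)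
        have mm: "max 0 (min (a'+\<delta>) t - a') = t - a'" using 2 by simp
        have "complex_of_real (indicator {a<..} t) - volterra u t = of_real (indicator {a<..} t - (t - a')/\<delta>)"
          by (simp only: Vu mm of_real_diff)
        then have "cmod (complex_of_real (indicator {a<..} t) - volterra u t) = \<bar>indicator {a<..} t - (t - a')/\<delta>\<bar>"
          by (simp only: norm_of_real)
        also have "\<dots> \<le> 1" using r by (auto simp: indicator_def)
        finally have "cmod (complex_of_real (indicator {a<..} t) - volterra u t) \<le> 1" .
        then have "(cmod (complex_of_real (indicator {a<..} t) - volterra u t))^2 \<le> 1"
          by (simp add: power_le_one)
        then show ?thesis using 2 by simp
      next
        case 3
        then show ?thesis using Vu d a' by (simp add: indicator_def)
      qed
    qed
    have "W 0 (\<lambda>t. complex_of_real (indicator {a<..} t) - volterra u t) \<le> (\<integral>t. indicator {a'..a'+\<delta>} t \<partial>M)"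
      unfolding W0
    proof (rule integral_mono)
      show "integrable M (\<lambda>t. (cmod (complex_of_real (indicator {a<..} t) - volterra u t))\<^sup>2)"
      proof (rule L2_sq_int, rule L2_diff)
        show "(\<lambda>t. complex_of_real (indicator {a<..} t)) \<in> L2_01"
          by (rule L2_bounded[where K=1]) (auto simp: indicator_def)
        show "volterra u \<in> L2_01" by (rule volterra_L2[OF uL2])
      qed
      show "integrable M (indicat_real {a'..a' + \<delta>})"
        by (rule finite_measure.integrable_const_bound[OF fin_M, where B=1]) (auto simp: indicator_def)
      fix t assume "t \<in> space M" then show "(cmod (complex_of_real (indicator {a<..} t) - volterra u t))\<^sup>2 \<le> indicator {a'..a' + \<delta>} t"
        using pw by simp
    qed
    also have "\<dots> \<le> \<delta>"
    proof -
      have "(\<integral>t. indicator {a'..a'+\<delta>} t \<partial>M) = measure M ({a'..a'+\<delta>} \<inter> {0..1})" by simp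
      also have "\<dots> = measure lebesgue ({a'..a'+\<delta>} \<inter> {0..1})" by (simp add: measure_restrict_space)
      also have "\<dots> \<le> measure lebesgue {a'..a'+\<delta>}"
        by (rule measure_mono_fmeasurable) auto
      also have "\<dots> = \<delta>" using d by simp
      finally show ?thesis .
    qed
    finally have "W 0 (\<lambda>t. complex_of_real (indicator {a<..} t) - volterra u t) < e"
      using d by linarith
    then show "\<exists>u\<in>L2_01. W 0 (\<lambda>t. complex_of_real (indicator {a<..} t) - volterra u t) < e"
      using uL2 by blast
  qed
qed

lemma L2_cong: assumes "f \<in> L2_01" "\<And>t. t \<in> {0..1} \<Longrightarrow> f t = g t" shows "g \<in> L2_01"
proof (rule L2_01I)
  show "g \<in> borel_measurable M"
    using L2_meas[OF assms(1)] by (subst measurable_cong[where g=f]) (auto simp: assms(2))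
  show "integrable M (\<lambda>t. (cmod (g t))\<^sup>2)"
    using L2_sq_int[OF assms(1)] by (subst Bochner_Integration.integrable_cong[where g="\<lambda>t. (cmod (f t))\<^sup>2"]) (auto simp: assms(2))
qed

lemma sqdiff_meas: "(f::real\<Rightarrow>complex) \<in> borel_measurable M \<Longrightarrow> g \<in> borel_measurable M \<Longrightarrow> (\<lambda>t. (cmod (f t - g t))^2) \<in> borel_measurable M"
  by measurable

lemma ind_L2: "(\<lambda>t. complex_of_real (indicator A t)) \<in> borel_measurable M \<Longrightarrow> (\<lambda>t. complex_of_real (indicator A t)) \<in> L2_01"
  by (rule L2_bounded[where K=1]) (auto simp: indicator_def)

lemma ind_meas_M: assumes "(indicator A :: real \<Rightarrow> real) \<in> borel_measurable M" shows "(\<lambda>t. complex_of_real (indicator A t)) \<in> borel_measurable M"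
  by (rule measurable_compose[OF assms borel_measurable_of_real])

lemma borel_ind_meas: assumes "A \<in> sets borel" shows "(\<lambda>t. complex_of_real (indicator A t)) \<in> borel_measurable M"
proof (rule ind_meas_M)
  have "(indicator A :: real \<Rightarrow> real) \<in> borel_measurable (borel::real measure)" using assms by (rule borel_measurable_indicator)
  then show "(indicator A :: real \<Rightarrow> real) \<in> borel_measurable M" by (rule measurable_compose[OF meas_id])
qed

lemma approx_borel: "A \<in> sets borel \<Longrightarrow> approx (\<lambda>t. complex_of_real (indicator A t))"
proof (induction rule: borel_set_induct)
  case empty
  show ?case using approx_zero by (rule approx_cong) simp
next
  case (interval a b)
  define g where "g t = complex_of_real (indicator {a<..} t) + (-1) * complex_of_real (indicator {b<..} t)" for t
  have L1: "(\<lambda>t. complex_of_real (indicator {a<..} t)) \<in> L2_01" by (rule ind_L2) measurable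
  have L2: "(\<lambda>t. complex_of_real (indicator {b<..} t)) \<in> L2_01" by (rule ind_L2) measurable
  have "approx g" unfolding g_def
    by (intro approx_add approx_scale approx_base L1 L2_scale L2)
  moreover have "g \<in> borel_measurable M" unfolding g_def by measurable
  moreover have "(\<lambda>t. complex_of_real (indicator {a..b} t)) \<in> borel_measurable M" by measurable
  moreover have "AE t in M. g t = complex_of_real (indicator {a..b} t)"
    using AE_M_neq[of a] by (rule AE_mp) (use interval in \<open>auto intro!: AE_I2 simp: g_def indicator_def\<close>)
  ultimately show ?case by (rule approx_AE)
next
  case (compl A)
  have LA: "(\<lambda>t. complex_of_real (indicator A t)) \<in> L2_01" using compl(1) by (intro ind_L2 borel_ind_meas)
  have L1: "(\<lambda>t. complex_of_real (indicator {-1<..} t)) \<in> L2_01" by (rule ind_L2) measurable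
  have "approx (\<lambda>t. complex_of_real (indicator {-1<..} t) + (-1) * complex_of_real (indicator A t))"
    by (intro approx_add approx_scale approx_base compl L1 L2_scale LA)
  then show ?case by (rule approx_cong) (auto simp: indicator_def)
next
  case (union f)
  define U where "U = (\<Union>i. f i)"
  define P where "P n t = (\<Sum>i\<in>{..<n}. complex_of_real (indicator (f i) t))" for n t
  have Lf: "\<And>i. (\<lambda>t. complex_of_real (indicator (f i) t)) \<in> L2_01"
    using union(2) by (intro ind_L2 borel_ind_meas)
  have aP: "approx (P n) \<and> P n \<in> L2_01" for n
    unfolding P_def using union(3) Lf by (intro approx_sum) auto
  have Pind: "P n t = complex_of_real (indicator (\<Union>i<n. f i) t)" for n t
  proof -
    have "indicator (\<Union>i<n. f i) t = (\<Sum>i\<in>{..<n}. (indicator (f i) t :: real))"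
      by (rule indicator_UN_disjoint) (use union(1) in \<open>auto simp: disjoint_family_on_def\<close>)
    then show ?thesis unfolding P_def by simp
  qed
  have UB: "U \<in> sets borel" unfolding U_def using union(2) by auto
  have LU: "(\<lambda>t. complex_of_real (indicator U t)) \<in> L2_01" using UB by (intro ind_L2 borel_ind_meas)
  define s where "s n t = (cmod (complex_of_real (indicator U t) - P n t))^2" for n t
  have ms: "\<And>n. s n \<in> borel_measurable M"
  proof -
    fix n
    have "P n \<in> borel_measurable M" using aP[of n] by (simp add: L2_meas)
    then show "s n \<in> borel_measurable M" unfolding s_def using L2_meas[OF LU] by (rule sqdiff_meas[rotated])
  qed
  have ae1: "AE x in M. (\<lambda>n. s n x) \<longlonglongrightarrow> 0"
  proof (rule AE_I2)
    fix x
    show "(\<lambda>n. s n x) \<longlonglongrightarrow> 0"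
    proof (cases "x \<in> U")
      case True
      then obtain j where j: "x \<in> f j" unfolding U_def by auto
      have "eventually (\<lambda>n. s n x = 0) sequentially"
        unfolding eventually_sequentially
      proof (intro exI allI impI)
        fix n assume "Suc j \<le> n"
        then have "x \<in> (\<Union>i<n. f i)" using j by auto
        then show "s n x = 0" unfolding s_def Pind using True by simp
      qed
      then show ?thesis by (rule tendsto_eventually)
    next
      case False
      then have "s n x = 0" for n unfolding s_def Pind U_def by (auto simp: indicator_def)
      then show ?thesis by simp
    qed
  qed
  have ae2: "\<And>n. AE x in M. norm (s n x) \<le> 1"
  proof -
    fix n
    show "AE x in M. norm (s n x) \<le> 1"
    proof (rule AE_I2)
      fix x
      have "(indicator U x :: real) - indicator (\<Union>i<n. f i) x \<in> {-1, 0, 1}"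
        by (auto simp: indicator_def)
      moreover have "s n x = ((indicator U x :: real) - indicator (\<Union>i<n. f i) x)^2"
        unfolding s_def Pind by (simp only: of_real_diff[symmetric] norm_of_real power2_abs)
      ultimately show "norm (s n x) \<le> 1" by auto
    qed
  qed
  have m0: "(\<lambda>t. 0::real) \<in> borel_measurable M" by simp
  have iw: "integrable M (\<lambda>t. 1::real)" by simp
  have lim: "(\<lambda>n. integral\<^sup>L M (s n)) \<longlonglongrightarrow> integral\<^sup>L M (\<lambda>t. 0)"
    by (rule integral_dominated_convergence[OF m0 ms iw ae1 ae2])
  show ?case
  proof (rule approx_lim[OF LU[unfolded U_def]])
    fix e :: real assume e: "e > 0"
    have lim0: "(\<lambda>n. integral\<^sup>L M (s n)) \<longlonglongrightarrow> 0" using lim by simp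
    obtain N where N: "\<forall>n\<ge>N. norm (integral\<^sup>L M (s n) - 0) < e" using LIMSEQ_D[OF lim0 e] by blast
    have "W 0 (\<lambda>t. complex_of_real (indicator (\<Union>i. f i) t) - P N t) = integral\<^sup>L M (s N)"
      unfolding W0 s_def U_def by (rule refl)
    then have "W 0 (\<lambda>t. complex_of_real (indicator (\<Union>i. f i) t) - P N t) < e"
      using N by auto
    then show "\<exists>h\<in>L2_01. approx h \<and> W 0 (\<lambda>t. complex_of_real (indicator (\<Union>i. f i) t) - h t) < e"
      using aP[of N] by blast
  qed
qed

lemma approx_lset: assumes "A \<in> sets M" shows "approx (\<lambda>t. complex_of_real (indicator A t))"
proof -
  have "A \<in> sets lebesgue" using assms by (simp add: sets_restrict_space_iff)
  then obtain S N N' where A: "A = S \<union> N" "N \<subseteq> N'" "N' \<in> null_sets lborel" "S \<in> sets lborel"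
    by (rule sets_completionE)
  have aS: "approx (\<lambda>t. complex_of_real (indicator S t))" using A(4) by (intro approx_borel) simp
  have "AE x in lebesgue. x \<notin> N'" by (rule AE_completion[OF AE_not_in[OF A(3)]])
  then have ae: "AE x in M. x \<notin> N'" by (subst AE_restrict_space_iff) (auto elim: AE_mp)
  show ?thesis
  proof (rule approx_AE[OF aS])
    show "(\<lambda>t. complex_of_real (indicator S t)) \<in> borel_measurable M" using A(4) by (intro borel_ind_meas) simp
    show "(\<lambda>t. complex_of_real (indicator A t)) \<in> borel_measurable M"
      by (intro ind_meas_M borel_measurable_indicator assms)
    show "AE t in M. complex_of_real (indicator S t) = complex_of_real (indicator A t)"
      using ae by (rule AE_mp) (use A(1,2) in \<open>auto intro!: AE_I2 simp: indicator_def\<close>)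
  qed
qed

lemma approx_simple: fixes s :: "real \<Rightarrow> complex" assumes "simple_function M s" shows "approx s \<and> s \<in> L2_01"
proof -
  define F where "F y t = y * complex_of_real (indicator (s -` {y} \<inter> space M) t)" for y t
  have fin: "finite (s ` space M)" using simple_functionD(1)[OF assms] .
  have sets: "s -` {y} \<inter> space M \<in> sets M" for y by (rule simple_functionD(2)[OF assms])
  have LF: "F y \<in> L2_01" for y unfolding F_def
    by (rule L2_scale, rule ind_L2, rule ind_meas_M, rule borel_measurable_indicator, rule sets)
  have aF: "approx (F y)" for y unfolding F_def by (rule approx_scale, rule approx_lset, rule sets)
  have sum: "approx (\<lambda>t. \<Sum>y\<in>s ` space M. F y t) \<and> (\<lambda>t. \<Sum>y\<in>s ` space M. F y t) \<in> L2_01"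
    by (rule approx_sum[OF fin LF aF])
  have eq: "(\<Sum>y\<in>s ` space M. F y t) = s t" if "t \<in> {0..1}" for t
  proof -
    have "s t = (\<Sum>y \<in> s ` space M. indicator (s -` {y} \<inter> space M) t *\<^sub>R y)"
      by (rule simple_function_indicator_representation_banach[OF assms]) (use that in simp)
    also have "\<dots> = (\<Sum>y\<in>s ` space M. F y t)"
      by (rule sum.cong[OF refl]) (simp add: F_def scaleR_conv_of_real)
    finally show ?thesis by (rule sym)
  qed
  have "approx s" using conjunct1[OF sum] by (rule approx_cong) (rule eq)
  moreover have "s \<in> L2_01" using conjunct2[OF sum] by (rule L2_cong) (rule eq)
  ultimately show ?thesis by blast
qed

theorem density: assumes "f \<in> L2_01" shows "approx f"
proof -
  obtain s where s: "\<And>i. simple_function M (s i)" "\<And>x. x \<in> space M \<Longrightarrow> (\<lambda>i. s i x) \<longlonglongrightarrow> f x"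
    "\<And>i x. x \<in> space M \<Longrightarrow> dist (s i x) 0 \<le> 2 * dist (f x) 0"
    using borel_measurable_implies_sequence_metric[OF L2_meas[OF assms], of 0] by blast
  have sL: "approx (s i) \<and> s i \<in> L2_01" for i by (rule approx_simple[OF s(1)])
  define g where "g i t = (cmod (f t - s i t))^2" for i t
  have lim: "(\<lambda>i. integral\<^sup>L M (g i)) \<longlonglongrightarrow> integral\<^sup>L M (\<lambda>t. 0)"
  proof (rule integral_dominated_convergence[where w="\<lambda>t. 9 * (cmod (f t))^2"])
    show "(\<lambda>t. 0::real) \<in> borel_measurable M" by simp
    show "g i \<in> borel_measurable M" for i
    proof -
      have "s i \<in> borel_measurable M" using sL[of i] by (simp add: L2_meas)
      then show ?thesis unfolding g_def using L2_meas[OF assms] by (rule sqdiff_meas[rotated])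
    qed
    show "integrable M (\<lambda>t. 9 * (cmod (f t))^2)" using L2_sq_int[OF assms] by simp
    show "AE x in M. (\<lambda>i. g i x) \<longlonglongrightarrow> 0"
    proof (rule AE_I2)
      fix x assume x: "x \<in> space M"
      have "(\<lambda>i. f x - s i x) \<longlonglongrightarrow> f x - f x" by (rule tendsto_diff[OF tendsto_const s(2)[OF x]])
      then have "(\<lambda>i. (cmod (f x - s i x))^2) \<longlonglongrightarrow> (cmod (f x - f x))^2" by (intro tendsto_power tendsto_norm)
      then show "(\<lambda>i. g i x) \<longlonglongrightarrow> 0" unfolding g_def by simp
    qed
    show "AE x in M. norm (g i x) \<le> 9 * (cmod (f x))^2" for i
    proof (rule AE_I2)
      fix x assume x: "x \<in> space M"
      have "cmod (f x - s i x) \<le> cmod (f x) + cmod (s i x)" by (rule norm_triangle_ineq4)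
      also have "\<dots> \<le> 3 * cmod (f x)" using s(3)[OF x, of i] by (simp add: dist_norm)
      finally have "(cmod (f x - s i x))^2 \<le> (3 * cmod (f x))^2" by (intro power_mono) auto
      then show "norm (g i x) \<le> 9 * (cmod (f x))^2" unfolding g_def by (simp add: power_mult_distrib)
    qed
  qed
  show ?thesis
  proof (rule approx_lim[OF assms])
    fix e :: real assume e: "e > 0"
    have lim0: "(\<lambda>n. integral\<^sup>L M (g n)) \<longlonglongrightarrow> 0" using lim by simp
    obtain N where N: "\<forall>n\<ge>N. norm (integral\<^sup>L M (g n) - 0) < e" using LIMSEQ_D[OF lim0 e] by blast
    have "W 0 (\<lambda>t. f t - s N t) = integral\<^sup>L M (g N)" unfolding W0 g_def by (rule refl)
    then have "W 0 (\<lambda>t. f t - s N t) < e" using N by auto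
    then show "\<exists>h\<in>L2_01. approx h \<and> W 0 (\<lambda>t. f t - h t) < e" using sL[of N] by blast
  qed
qed

definition LHS :: "real \<Rightarrow> (real \<Rightarrow> complex) \<Rightarrow> real" where
  "LHS s g = (\<integral>t. exp (-2 * s * t) * (2 * Re (g t * cnj (volterra g t))) \<partial>M)"

definition RHS :: "real \<Rightarrow> (real \<Rightarrow> complex) \<Rightarrow> real" where
  "RHS s g = exp (-2 * s) * (cmod (volterra g 1))^2 + 2 * s * W s (volterra g)"

lemma EI_cont': "continuous_on {0..1} g \<Longrightarrow> LHS s g = RHS s g"
  unfolding LHS_def RHS_def W_def by (rule EI_cont)

lemma weight_le1: assumes "(s::real) \<ge> 0" "t \<in> {0..1}" shows "exp (-2 * s * t) \<le> 1"
proof -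
  have "0 \<le> s * t" using assms by simp
  then have "-2 * s * t \<le> 0" by simp
  then show ?thesis by simp
qed

lemma absdiff_w: "(w::real) \<ge> 0 \<Longrightarrow> \<bar>w * (2 * Re A) - w * (2 * Re B)\<bar> \<le> w * (2 * cmod (A - B))"
proof -
  assume w: "w \<ge> 0"
  have e: "w * (2 * Re A) - w * (2 * Re B) = w * (2 * Re (A - B))" by (simp add: algebra_simps)
  have "\<bar>w * (2 * Re A) - w * (2 * Re B)\<bar> = w * (2 * \<bar>Re (A - B)\<bar>)"
    unfolding e abs_mult using w by simp
  also have "\<dots> \<le> w * (2 * cmod (A - B))" using w abs_Re_le_cmod[of "A - B"] by (intro mult_left_mono) auto
  finally show ?thesis .
qed

lemma abs_w: "(w::real) \<le> 1 \<Longrightarrow> 0 \<le> w \<Longrightarrow> \<bar>w * (2 * Re A)\<bar> \<le> 1 * (2 * cmod A)"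
proof -
  assume w: "w \<le> 1" "0 \<le> w"
  have "\<bar>w * (2 * Re A)\<bar> = w * (2 * \<bar>Re A\<bar>)" using w by (simp add: abs_mult)
  also have "\<dots> \<le> 1 * (2 * cmod A)" using w abs_Re_le_cmod[of A] by (intro mult_mono) auto
  finally show ?thesis .
qed

lemma absdiff_pq: "(p::real) \<ge> 0 \<Longrightarrow> q \<ge> 0 \<Longrightarrow> \<bar>(p * x + q * y) - (p * x' + q * y')\<bar> \<le> p * \<bar>x - x'\<bar> + q * \<bar>y - y'\<bar>"
proof -
  assume pq: "p \<ge> 0" "q \<ge> 0"
  have "\<bar>(p * x + q * y) - (p * x' + q * y')\<bar> = \<bar>p * (x - x') + q * (y - y')\<bar>" by (simp add: algebra_simps)
  also have "\<dots> \<le> \<bar>p * (x - x')\<bar> + \<bar>q * (y - y')\<bar>" by (rule abs_triangle_ineq)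
  also have "\<dots> = p * \<bar>x - x'\<bar> + q * \<bar>y - y'\<bar>" using pq by (simp add: abs_mult)
  finally show ?thesis .
qed

lemma LHS_meas: assumes "g \<in> L2_01"
  shows "(\<lambda>t. exp (-2 * s * t) * (2 * Re (g t * cnj (volterra g t)))) \<in> borel_measurable M"
proof -
  have [measurable]: "g \<in> borel_measurable M" using L2_meas[OF assms] .
  have [measurable]: "volterra g \<in> borel_measurable M" using volterra_meas[OF L2_integrable[OF assms]] .
  have eq: "(\<lambda>t. exp (-2 * s * t) * (2 * Re (g t * cnj (volterra g t))))
     = (\<lambda>t. exp (-2 * s * t) * (2 * (Re (g t) * Re (volterra g t) + Im (g t) * Im (volterra g t))))"
    by simp
  show ?thesis unfolding eq by measurable
qed

lemma LHS_int: assumes "g \<in> L2_01" "s \<ge> 0"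
  shows "integrable M (\<lambda>t. exp (-2 * s * t) * (2 * Re (g t * cnj (volterra g t))))"
proof (rule Bochner_Integration.integrable_bound)
  show "integrable M (\<lambda>t. 2 * m1 g * cmod (g t))" using L2_norm_int[OF assms(1)] by simp
  show "(\<lambda>t. exp (-2 * s * t) * (2 * Re (g t * cnj (volterra g t)))) \<in> borel_measurable M"
    by (rule LHS_meas[OF assms(1)])
  show "AE t in M. norm (exp (-2 * s * t) * (2 * Re (g t * cnj (volterra g t)))) \<le> norm (2 * m1 g * cmod (g t))"
  proof (rule AE_I2)
    fix t assume t: "t \<in> space M"
    have t': "t \<in> {0..1}" using t by simp
    have w: "exp (-2 * s * t) \<le> 1" by (rule weight_le1[OF assms(2) t'])
    have V: "cmod (volterra g t) \<le> m1 g" using volterra_norm_le[OF L2_integrable[OF assms(1)]] t by simp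
    have "\<bar>exp (-2 * s * t) * (2 * Re (g t * cnj (volterra g t)))\<bar> \<le> 1 * (2 * cmod (g t * cnj (volterra g t)))"
      using w by (rule abs_w) simp
    also have "\<dots> = 2 * cmod (g t) * cmod (volterra g t)" by (simp add: norm_mult)
    also have "\<dots> \<le> 2 * cmod (g t) * m1 g" using V by (simp add: mult_left_mono)
    finally show "norm (exp (-2 * s * t) * (2 * Re (g t * cnj (volterra g t)))) \<le> norm (2 * m1 g * cmod (g t))"
      using m1_nonneg[of g] by (simp add: mult.commute mult.left_commute)
  qed
qed

lemma int_diff_bound:
  fixes f1 f2 h :: "real \<Rightarrow> real"
  assumes "integrable M f1" "integrable M f2" "integrable M h" "\<And>t. t \<in> {0..1} \<Longrightarrow> \<bar>f1 t - f2 t\<bar> \<le> h t"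
  shows "\<bar>integral\<^sup>L M f1 - integral\<^sup>L M f2\<bar> \<le> integral\<^sup>L M h"
proof -
  have "\<bar>integral\<^sup>L M f1 - integral\<^sup>L M f2\<bar> = \<bar>\<integral>t. f1 t - f2 t \<partial>M\<bar>" using assms(1,2) by simp
  also have "\<dots> \<le> (\<integral>t. \<bar>f1 t - f2 t\<bar> \<partial>M)" by (rule integral_abs_bound)
  also have "\<dots> \<le> integral\<^sup>L M h"
  proof (rule integral_mono)
    show "integrable M (\<lambda>t. \<bar>f1 t - f2 t\<bar>)"
      by (rule integrable_abs[OF Bochner_Integration.integrable_diff[OF assms(1,2)]])
    show "integrable M h" by (rule assms(3))
    fix t assume "t \<in> space M"
    then show "\<bar>f1 t - f2 t\<bar> \<le> h t" using assms(4)[of t] by simp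
  qed
  finally show ?thesis .
qed

lemma m1_tri: assumes "f \<in> L2_01" "g \<in> L2_01" shows "m1 g \<le> m1 f + m1 (\<lambda>t. f t - g t)"
proof -
  have "m1 g \<le> (\<integral>t. cmod (f t) + cmod (f t - g t) \<partial>M)" unfolding m1_def
  proof (rule integral_mono)
    show "integrable M (\<lambda>t. cmod (g t))" by (rule L2_norm_int[OF assms(2)])
    show "integrable M (\<lambda>t. cmod (f t) + cmod (f t - g t))"
      using L2_norm_int[OF assms(1)] L2_norm_int[OF L2_diff[OF assms]] by simp
    fix t show "cmod (g t) \<le> cmod (f t) + cmod (f t - g t)"
      using norm_triangle_ineq4[of "f t" "f t - g t"] by simp
  qed
  also have "\<dots> = m1 f + m1 (\<lambda>t. f t - g t)" unfolding m1_def
    by (rule Bochner_Integration.integral_add[OF L2_norm_int[OF assms(1)] L2_norm_int[OF L2_diff[OF assms]]])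
  finally show ?thesis .
qed

lemma m1_int_const: "(\<integral>t. K * cmod (g t) \<partial>M) = K * m1 g"
  unfolding m1_def by (rule integral_mult_right_zero)

lemma LHS_cont: assumes "g1 \<in> L2_01" "g2 \<in> L2_01" "s \<ge> 0"
  shows "\<bar>LHS s g1 - LHS s g2\<bar> \<le> 2 * (m1 g1 + m1 g2) * m1 (\<lambda>t. g1 t - g2 t)"
proof -
  define d where "d t = g1 t - g2 t" for t
  have dL: "d \<in> L2_01" unfolding d_def by (rule L2_diff[OF assms(1,2)])
  let ?a = "m1 g1" and ?b = "m1 g2" and ?\<delta> = "m1 d"
  have "\<bar>LHS s g1 - LHS s g2\<bar> \<le> (\<integral>t. 2 * ?a * cmod (d t) + 2 * ?\<delta> * cmod (g2 t) \<partial>M)"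
    unfolding LHS_def
  proof (rule int_diff_bound[OF LHS_int[OF assms(1,3)] LHS_int[OF assms(2,3)]])
    show "integrable M (\<lambda>t. 2 * ?a * cmod (d t) + 2 * ?\<delta> * cmod (g2 t))"
      using L2_norm_int[OF dL] L2_norm_int[OF assms(2)] by simp
    fix t :: real assume t: "t \<in> {0..1}"
    have w: "exp (-2 * s * t) \<le> 1" using weight_le1[OF assms(3) t] .
    have VG: "volterra g1 t - volterra g2 t = volterra d t"
      unfolding d_def using L2_integrable[OF assms(1)] L2_integrable[OF assms(2)] t
      by (intro volterra_diff[symmetric]) auto
    have V1: "cmod (volterra g1 t) \<le> ?a" using volterra_norm_le[OF L2_integrable[OF assms(1)]] t by simp
    have Vd: "cmod (volterra d t) \<le> ?\<delta>" using volterra_norm_le[OF L2_integrable[OF dL]] t by simp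
    have alg: "g1 t * cnj (volterra g1 t) - g2 t * cnj (volterra g2 t) = d t * cnj (volterra g1 t) + g2 t * cnj (volterra d t)"
      unfolding VG[symmetric] by (simp add: d_def algebra_simps)
    have "\<bar>exp (-2 * s * t) * (2 * Re (g1 t * cnj (volterra g1 t))) - exp (-2 * s * t) * (2 * Re (g2 t * cnj (volterra g2 t)))\<bar>
        \<le> exp (-2 * s * t) * (2 * cmod (g1 t * cnj (volterra g1 t) - g2 t * cnj (volterra g2 t)))"
      by (rule absdiff_w) simp
    also have "\<dots> \<le> 1 * (2 * cmod (g1 t * cnj (volterra g1 t) - g2 t * cnj (volterra g2 t)))"
      using w by (intro mult_right_mono) auto
    also have "\<dots> = 2 * cmod (d t * cnj (volterra g1 t) + g2 t * cnj (volterra d t))" using alg by simp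
    also have "\<dots> \<le> 2 * (cmod (d t) * cmod (volterra g1 t) + cmod (g2 t) * cmod (volterra d t))"
      using norm_triangle_ineq[of "d t * cnj (volterra g1 t)" "g2 t * cnj (volterra d t)"] by (simp add: norm_mult)
    also have "\<dots> \<le> 2 * (cmod (d t) * ?a + cmod (g2 t) * ?\<delta>)"
      using V1 Vd by (intro mult_left_mono add_mono mult_left_mono) auto
    finally show "\<bar>exp (-2 * s * t) * (2 * Re (g1 t * cnj (volterra g1 t))) - exp (-2 * s * t) * (2 * Re (g2 t * cnj (volterra g2 t)))\<bar>
        \<le> 2 * ?a * cmod (d t) + 2 * ?\<delta> * cmod (g2 t)" by (simp add: algebra_simps)
  qed
  also have "\<dots> = 2 * ?a * ?\<delta> + 2 * ?\<delta> * ?b"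
    using L2_norm_int[OF dL] L2_norm_int[OF assms(2)] unfolding m1_def by simp
  also have "\<dots> = 2 * (?a + ?b) * ?\<delta>" by (simp add: algebra_simps)
  finally show ?thesis unfolding d_def .
qed

lemma sqdiff_le: "\<bar>(cmod x)^2 - (cmod y)^2\<bar> \<le> (cmod x + cmod y) * cmod (x - y)"
proof -
  have e: "(cmod x)^2 - (cmod y)^2 = (cmod x + cmod y) * (cmod x - cmod y)"
    by (simp add: power2_eq_square algebra_simps)
  have "\<bar>(cmod x)^2 - (cmod y)^2\<bar> = \<bar>cmod x + cmod y\<bar> * \<bar>cmod x - cmod y\<bar>"
    unfolding e by (rule abs_mult)
  also have "\<bar>cmod x + cmod y\<bar> = cmod x + cmod y" by simp
  finally have "\<bar>(cmod x)^2 - (cmod y)^2\<bar> = (cmod x + cmod y) * \<bar>cmod x - cmod y\<bar>" .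
  also have "\<dots> \<le> (cmod x + cmod y) * cmod (x - y)"
    by (intro mult_left_mono norm_triangle_ineq3) auto
  finally show ?thesis .
qed

lemma RHS_cont: assumes "g1 \<in> L2_01" "g2 \<in> L2_01" "s \<ge> 0"
  shows "\<bar>RHS s g1 - RHS s g2\<bar> \<le> (1 + 2 * s) * (m1 g1 + m1 g2) * m1 (\<lambda>t. g1 t - g2 t)"
proof -
  define d where "d t = g1 t - g2 t" for t
  have dL: "d \<in> L2_01" unfolding d_def by (rule L2_diff[OF assms(1,2)])
  let ?a = "m1 g1" and ?b = "m1 g2" and ?\<delta> = "m1 d"
  have key: "\<bar>(cmod (volterra g1 t))^2 - (cmod (volterra g2 t))^2\<bar> \<le> (?a + ?b) * ?\<delta>" if t: "t \<in> {0..1}" for t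
  proof -
    have VG: "volterra g1 t - volterra g2 t = volterra d t"
      unfolding d_def using L2_integrable[OF assms(1)] L2_integrable[OF assms(2)] t
      by (intro volterra_diff[symmetric]) auto
    have V1: "cmod (volterra g1 t) \<le> ?a" using volterra_norm_le[OF L2_integrable[OF assms(1)]] t by simp
    have V2: "cmod (volterra g2 t) \<le> ?b" using volterra_norm_le[OF L2_integrable[OF assms(2)]] t by simp
    have Vd: "cmod (volterra d t) \<le> ?\<delta>" using volterra_norm_le[OF L2_integrable[OF dL]] t by simp
    have "\<bar>(cmod (volterra g1 t))^2 - (cmod (volterra g2 t))^2\<bar> \<le> (cmod (volterra g1 t) + cmod (volterra g2 t)) * cmod (volterra d t)"
      using sqdiff_le[of "volterra g1 t" "volterra g2 t"] VG by simp
    also have "\<dots> \<le> (?a + ?b) * ?\<delta>" using V1 V2 Vd m1_nonneg[of g1] m1_nonneg[of g2] by (intro mult_mono add_mono) auto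
    finally show ?thesis .
  qed
  have p1: "exp (-2 * s) * \<bar>(cmod (volterra g1 1))^2 - (cmod (volterra g2 1))^2\<bar> \<le> (?a + ?b) * ?\<delta>"
  proof -
    have "exp (-2 * s) \<le> 1" using assms(3) by simp
    then have "exp (-2 * s) * \<bar>(cmod (volterra g1 1))^2 - (cmod (volterra g2 1))^2\<bar> \<le> 1 * ((?a + ?b) * ?\<delta>)"
      using key[of 1] by (intro mult_mono) auto
    then show ?thesis by simp
  qed
  have p2: "\<bar>W s (volterra g1) - W s (volterra g2)\<bar> \<le> (?a + ?b) * ?\<delta>"
  proof -
    have "\<bar>W s (volterra g1) - W s (volterra g2)\<bar> \<le> (\<integral>t. (?a + ?b) * ?\<delta> \<partial>M)"
      unfolding W_def
    proof (rule int_diff_bound[OF weight_int[OF volterra_L2[OF assms(1)]] weight_int[OF volterra_L2[OF assms(2)]]])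
      show "integrable M (\<lambda>t. (?a + ?b) * ?\<delta>)" by simp
      fix t :: real assume t: "t \<in> {0..1}"
      have "\<bar>exp (-2 * s * t) * (cmod (volterra g1 t))^2 - exp (-2 * s * t) * (cmod (volterra g2 t))^2\<bar>
          = exp (-2 * s * t) * \<bar>(cmod (volterra g1 t))^2 - (cmod (volterra g2 t))^2\<bar>"
      proof -
        have e: "exp (-2 * s * t) * (cmod (volterra g1 t))^2 - exp (-2 * s * t) * (cmod (volterra g2 t))^2
           = exp (-2 * s * t) * ((cmod (volterra g1 t))^2 - (cmod (volterra g2 t))^2)" by (simp add: algebra_simps)
        show ?thesis unfolding e abs_mult by simp
      qed
      also have "\<dots> \<le> 1 * ((?a + ?b) * ?\<delta>)" using key[OF t] weight_le1[OF assms(3) t] by (intro mult_mono) auto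
      finally show "\<bar>exp (-2 * s * t) * (cmod (volterra g1 t))^2 - exp (-2 * s * t) * (cmod (volterra g2 t))^2\<bar>
          \<le> (?a + ?b) * ?\<delta>" by simp
    qed
    then show ?thesis by simp
  qed
  have "\<bar>RHS s g1 - RHS s g2\<bar> \<le> exp (-2 * s) * \<bar>(cmod (volterra g1 1))^2 - (cmod (volterra g2 1))^2\<bar>
       + 2 * s * \<bar>W s (volterra g1) - W s (volterra g2)\<bar>"
    unfolding RHS_def by (rule absdiff_pq) (use assms(3) in simp_all)
  also have "\<dots> \<le> (?a + ?b) * ?\<delta> + 2 * s * ((?a + ?b) * ?\<delta>)"
    using p1 p2 assms(3) by (intro add_mono mult_left_mono) auto
  also have "\<dots> = (1 + 2 * s) * (?a + ?b) * ?\<delta>" by (simp add: algebra_simps)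
  finally show ?thesis unfolding d_def .
qed

lemma EI: assumes g: "g \<in> L2_01" and s: "s \<ge> 0" shows "LHS s g = RHS s g"
proof (rule ccontr)
  assume ne: "LHS s g \<noteq> RHS s g"
  define D where "D = \<bar>LHS s g - RHS s g\<bar>"
  have Dpos: "D > 0" using ne unfolding D_def by simp
  define a where "a = m1 g"
  have a0: "a \<ge> 0" unfolding a_def by (rule m1_nonneg)
  define K where "K = (3 + 2 * s) * (2 * a + 1)"
  have Kpos: "K > 0" unfolding K_def using s a0 by (intro mult_pos_pos) auto
  define \<eta> where "\<eta> = min 1 (D / (2 * K))"
  have eta: "\<eta> > 0" "\<eta> \<le> 1" "K * \<eta> \<le> D / 2"
  proof -
    show "\<eta> > 0" unfolding \<eta>_def using Dpos Kpos by simp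
    show "\<eta> \<le> 1" unfolding \<eta>_def by simp
    have "\<eta> \<le> D / (2 * K)" unfolding \<eta>_def by simp
    then have "K * \<eta> \<le> K * (D / (2 * K))" using Kpos by (intro mult_left_mono) auto
    also have "\<dots> = D / 2" using Kpos by simp
    finally show "K * \<eta> \<le> D / 2" .
  qed
  have "\<eta>^2 > 0" using eta by simp
  then obtain u where u: "u \<in> L2_01" "W 0 (\<lambda>t. g t - volterra u t) < \<eta>^2"
    using approxD[OF density[OF g]] by blast
  define h where "h = volterra u"
  have hL: "h \<in> L2_01" unfolding h_def by (rule volterra_L2[OF u(1)])
  have hc: "continuous_on {0..1} h" unfolding h_def by (rule volterra_cont[OF L2_integrable[OF u(1)]])
  define \<delta> where "\<delta> = m1 (\<lambda>t. g t - h t)"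
  have d0: "\<delta> \<ge> 0" unfolding \<delta>_def by (rule m1_nonneg)
  have "\<delta> \<le> sqrt (W 0 (\<lambda>t. g t - h t))" unfolding \<delta>_def by (rule m1_le_sqrt[OF L2_diff[OF g hL]])
  also have "\<dots> < sqrt (\<eta>^2)" using u(2) unfolding h_def by (intro real_sqrt_less_mono)
  also have "\<dots> = \<eta>" using eta by simp
  finally have dlt: "\<delta> < \<eta>" .
  have b: "m1 h \<le> a + \<delta>" unfolding a_def \<delta>_def by (rule m1_tri[OF g hL])
  have eqh: "LHS s h = RHS s h" by (rule EI_cont'[OF hc])
  have "D = \<bar>(LHS s g - LHS s h) - (RHS s g - RHS s h)\<bar>" unfolding D_def using eqh by simp
  also have "\<dots> \<le> \<bar>LHS s g - LHS s h\<bar> + \<bar>RHS s g - RHS s h\<bar>" by (rule abs_triangle_ineq4)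
  also have "\<dots> \<le> 2 * (a + m1 h) * \<delta> + (1 + 2 * s) * (a + m1 h) * \<delta>"
    unfolding a_def \<delta>_def by (intro add_mono LHS_cont RHS_cont g hL s)
  also have "\<dots> = (3 + 2 * s) * (a + m1 h) * \<delta>" by (simp add: algebra_simps)
  also have "\<dots> \<le> (3 + 2 * s) * (2 * a + 1) * \<eta>"
  proof -
    have "a + m1 h \<le> 2 * a + 1" using b dlt eta(2) by linarith
    moreover have "0 \<le> a + m1 h" using a0 m1_nonneg[of h] by simp
    ultimately have "(a + m1 h) * \<delta> \<le> (2 * a + 1) * \<eta>" using dlt d0 by (intro mult_mono) auto
    then show ?thesis using s by (simp add: mult.assoc mult_left_mono)
  qed
  also have "\<dots> = K * \<eta>" unfolding K_def ..
  also have "\<dots> \<le> D / 2" by (rule eta(3))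
  finally show False using Dpos by simp
qed

lemma sq_expand: "(cmod (x + complex_of_real r * y))^2 = (cmod x)^2 + r * (2 * Re (x * cnj y)) + r^2 * (cmod y)^2"
  unfolding cmod_power2 by (simp add: power2_eq_square algebra_simps)

lemma W_expand: assumes x: "x \<in> L2_01" and s: "s \<ge> 0"
  shows "W s (\<lambda>t. x t + complex_of_real r * volterra x t) = W s x + r * LHS s x + r^2 * W s (volterra x)"
proof -
  have i1: "integrable M (\<lambda>t. exp (-2 * s * t) * (cmod (x t))^2)" by (rule weight_int[OF x])
  have i2: "integrable M (\<lambda>t. r * (exp (-2 * s * t) * (2 * Re (x t * cnj (volterra x t)))))"
    using LHS_int[OF x s] by simp
  have i3: "integrable M (\<lambda>t. r^2 * (exp (-2 * s * t) * (cmod (volterra x t))^2))"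
    using weight_int[OF volterra_L2[OF x]] by simp
  have "W s (\<lambda>t. x t + complex_of_real r * volterra x t)
      = (\<integral>t. exp (-2 * s * t) * (cmod (x t))^2 + r * (exp (-2 * s * t) * (2 * Re (x t * cnj (volterra x t))))
            + r^2 * (exp (-2 * s * t) * (cmod (volterra x t))^2) \<partial>M)"
    unfolding W_def by (rule Bochner_Integration.integral_cong[OF refl]) (simp add: sq_expand algebra_simps)
  also have "\<dots> = (\<integral>t. exp (-2 * s * t) * (cmod (x t))^2 + r * (exp (-2 * s * t) * (2 * Re (x t * cnj (volterra x t)))) \<partial>M)
            + (\<integral>t. r^2 * (exp (-2 * s * t) * (cmod (volterra x t))^2) \<partial>M)"
    by (rule Bochner_Integration.integral_add[OF Bochner_Integration.integrable_add[OF i1 i2] i3])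
  also have "(\<integral>t. exp (-2 * s * t) * (cmod (x t))^2 + r * (exp (-2 * s * t) * (2 * Re (x t * cnj (volterra x t)))) \<partial>M)
      = W s x + (\<integral>t. r * (exp (-2 * s * t) * (2 * Re (x t * cnj (volterra x t)))) \<partial>M)"
    unfolding W_def by (rule Bochner_Integration.integral_add[OF i1 i2])
  also have "(\<integral>t. r * (exp (-2 * s * t) * (2 * Re (x t * cnj (volterra x t)))) \<partial>M) = r * LHS s x"
    unfolding LHS_def by (rule integral_mult_right_zero)
  also have "(\<integral>t. r^2 * (exp (-2 * s * t) * (cmod (volterra x t))^2) \<partial>M) = r^2 * W s (volterra x)"
    unfolding W_def by (rule integral_mult_right_zero)
  finally show ?thesis .
qed

lemma step_minus: assumes x: "x \<in> L2_01" and c: "c > 0"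
  shows "W c (\<lambda>t. x t - complex_of_real c * volterra x t) \<le> W c x - c^2 * W c (volterra x)"
proof -
  have e: "(\<lambda>t. x t - complex_of_real c * volterra x t) = (\<lambda>t. x t + complex_of_real (-c) * volterra x t)"
    by simp
  have "W c (\<lambda>t. x t - complex_of_real c * volterra x t) = W c x + (-c) * LHS c x + (-c)^2 * W c (volterra x)"
    unfolding e by (rule W_expand[OF x]) (use c in simp)
  also have "LHS c x = exp (-2 * c) * (cmod (volterra x 1))^2 + 2 * c * W c (volterra x)"
    using EI[OF x, of c] c unfolding RHS_def by simp
  finally have "W c (\<lambda>t. x t - complex_of_real c * volterra x t)
      = W c x - c * exp (-2 * c) * (cmod (volterra x 1))^2 - c^2 * W c (volterra x)"
    by (simp add: algebra_simps power2_eq_square)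
  moreover have "0 \<le> c * exp (-2 * c) * (cmod (volterra x 1))^2" using c by simp
  ultimately show ?thesis by linarith
qed

lemma step_plus: assumes x: "x \<in> L2_01" and c: "c \<ge> 0"
  shows "W 0 x + c^2 * W 0 (volterra x) \<le> W 0 (\<lambda>t. x t + complex_of_real c * volterra x t)"
proof -
  have "W 0 (\<lambda>t. x t + complex_of_real c * volterra x t) = W 0 x + c * LHS 0 x + c^2 * W 0 (volterra x)"
    by (rule W_expand[OF x]) simp
  moreover have "LHS 0 x = (cmod (volterra x 1))^2"
    using EI[OF x, of 0] unfolding RHS_def by simp
  moreover have "0 \<le> c * (cmod (volterra x 1))^2" using c by simp
  ultimately show ?thesis by simp
qed

lemma A_eq: "I_minus_cV c g = (\<lambda>t. g t - complex_of_real c * volterra g t)"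
  unfolding I_minus_cV_def ..

lemma A_Suc: "(I_minus_cV c ^^ Suc n) x t = (I_minus_cV c ^^ n) x t - complex_of_real c * volterra ((I_minus_cV c ^^ n) x) t"
  by (simp add: I_minus_cV_def)

lemma A_Suc_fun: "(I_minus_cV c ^^ Suc n) x = (\<lambda>t. (I_minus_cV c ^^ n) x t - complex_of_real c * volterra ((I_minus_cV c ^^ n) x) t)"
  by (rule ext) (rule A_Suc)

lemma A_L2: "g \<in> L2_01 \<Longrightarrow> I_minus_cV c g \<in> L2_01"
  unfolding A_eq by (rule L2_diff[OF _ L2_scale[OF volterra_L2]])

lemma An_L2: "f \<in> L2_01 \<Longrightarrow> (I_minus_cV c ^^ n) f \<in> L2_01"
  by (induction n) (simp_all add: A_L2)

lemma A_step: "g \<in> L2_01 \<Longrightarrow> c > 0 \<Longrightarrow> W c (I_minus_cV c g) + c^2 * W c (volterra g) \<le> W c g"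
  unfolding A_eq using step_minus by fastforce

lemma A_tele: assumes f: "f \<in> L2_01" and c: "c > 0"
  shows "W c ((I_minus_cV c ^^ n) f) + c^2 * (\<Sum>k<n. W c (volterra ((I_minus_cV c ^^ k) f))) \<le> W c f"
proof (induction n)
  case 0 then show ?case by simp
next
  case (Suc n)
  have "W c ((I_minus_cV c ^^ Suc n) f) + c^2 * (\<Sum>k<Suc n. W c (volterra ((I_minus_cV c ^^ k) f)))
      = (W c (I_minus_cV c ((I_minus_cV c ^^ n) f)) + c^2 * W c (volterra ((I_minus_cV c ^^ n) f)))
        + c^2 * (\<Sum>k<n. W c (volterra ((I_minus_cV c ^^ k) f)))"
    by (simp add: algebra_simps)
  also have "\<dots> \<le> W c ((I_minus_cV c ^^ n) f) + c^2 * (\<Sum>k<n. W c (volterra ((I_minus_cV c ^^ k) f)))"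
    using A_step[OF An_L2[OF f] c] by simp
  also have "\<dots> \<le> W c f" by (rule Suc.IH)
  finally show ?case .
qed

lemma A_contr: assumes f: "f \<in> L2_01" and c: "c > 0" shows "W c ((I_minus_cV c ^^ n) f) \<le> W c f"
proof -
  have "0 \<le> c^2 * (\<Sum>k<n. W c (volterra ((I_minus_cV c ^^ k) f)))"
    by (intro mult_nonneg_nonneg sum_nonneg W_nonneg) simp
  then show ?thesis using A_tele[OF f c, of n] by linarith
qed

lemma A_Vto0: assumes f: "f \<in> L2_01" and c: "c > 0"
  shows "(\<lambda>k. W c (volterra ((I_minus_cV c ^^ k) f))) \<longlonglongrightarrow> 0"
proof (rule summable_LIMSEQ_zero)
  show "summable (\<lambda>k. W c (volterra ((I_minus_cV c ^^ k) f)))"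
  proof (rule summableI_nonneg_bounded)
    show "0 \<le> W c (volterra ((I_minus_cV c ^^ k) f))" for k by (rule W_nonneg)
    fix n
    have "c^2 * (\<Sum>k<n. W c (volterra ((I_minus_cV c ^^ k) f))) \<le> W c f"
      using A_tele[OF f c, of n] W_nonneg[of c "(I_minus_cV c ^^ n) f"] by linarith
    then show "(\<Sum>k<n. W c (volterra ((I_minus_cV c ^^ k) f))) \<le> W c f / c^2"
      using c by (simp add: field_simps mult.commute)
  qed
qed

lemma A_comm: assumes u: "u \<in> L2_01"
  shows "t \<in> {0..1} \<Longrightarrow> (I_minus_cV c ^^ n) (volterra u) t = volterra ((I_minus_cV c ^^ n) u) t"
proof (induction n arbitrary: t)
  case 0 then show ?case by simp
next
  case (Suc n)
  let ?X = "(I_minus_cV c ^^ n) u"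
  have XL: "?X \<in> L2_01" by (rule An_L2[OF u])
  have t1: "t \<le> 1" using Suc.prems by simp
  have h1: "volterra ((I_minus_cV c ^^ n) (volterra u)) t = volterra (volterra ?X) t"
    by (rule volterra_cong) (use Suc.IH Suc.prems in auto)
  have h2: "volterra ((I_minus_cV c ^^ Suc n) u) t = volterra ?X t - complex_of_real c * volterra (volterra ?X) t"
  proof -
    have "volterra ((I_minus_cV c ^^ Suc n) u) t = volterra (\<lambda>s. ?X s - complex_of_real c * volterra ?X s) t"
      by (subst A_Suc_fun) (rule refl)
    also have "\<dots> = volterra ?X t - volterra (\<lambda>s. complex_of_real c * volterra ?X s) t"
      by (rule volterra_diff[OF L2_integrable[OF XL] L2_integrable[OF L2_scale[OF volterra_L2[OF XL]]] t1])
    also have "volterra (\<lambda>s. complex_of_real c * volterra ?X s) t = complex_of_real c * volterra (volterra ?X) t"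
      by (rule volterra_scale)
    finally show ?thesis .
  qed
  have "(I_minus_cV c ^^ Suc n) (volterra u) t = (I_minus_cV c ^^ n) (volterra u) t - complex_of_real c * volterra ((I_minus_cV c ^^ n) (volterra u)) t"
    by (rule A_Suc)
  also have "\<dots> = volterra ?X t - complex_of_real c * volterra (volterra ?X) t"
    using Suc.IH[OF Suc.prems] h1 by simp
  also have "\<dots> = volterra ((I_minus_cV c ^^ Suc n) u) t" using h2 by simp
  finally show ?case .
qed

lemma A_lin: assumes f: "f \<in> L2_01" and h: "h \<in> L2_01"
  shows "t \<in> {0..1} \<Longrightarrow> (I_minus_cV c ^^ n) (\<lambda>s. f s - h s) t = (I_minus_cV c ^^ n) f t - (I_minus_cV c ^^ n) h t"
proof (induction n arbitrary: t)
  case 0 then show ?case by simp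
next
  case (Suc n)
  let ?X = "(I_minus_cV c ^^ n) (\<lambda>s. f s - h s)" and ?Y = "(I_minus_cV c ^^ n) f" and ?Z = "(I_minus_cV c ^^ n) h"
  have t1: "t \<le> 1" using Suc.prems by simp
  have "volterra ?X t = volterra (\<lambda>s. ?Y s - ?Z s) t"
    by (rule volterra_cong) (use Suc.IH Suc.prems in auto)
  also have "\<dots> = volterra ?Y t - volterra ?Z t"
    by (rule volterra_diff[OF L2_integrable[OF An_L2[OF f]] L2_integrable[OF An_L2[OF h]] t1])
  finally have "volterra ?X t = volterra ?Y t - volterra ?Z t" .
  note hV = this
  have "(I_minus_cV c ^^ Suc n) (\<lambda>s. f s - h s) t = ?X t - complex_of_real c * volterra ?X t"
    by (rule A_Suc)
  also have "\<dots> = (?Y t - complex_of_real c * volterra ?Y t) - (?Z t - complex_of_real c * volterra ?Z t)"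
    unfolding Suc.IH[OF Suc.prems] hV by (simp add: algebra_simps)
  also have "\<dots> = (I_minus_cV c ^^ Suc n) f t - (I_minus_cV c ^^ Suc n) h t"
    by (simp only: A_Suc)
  finally show ?case .
qed

theorem part1: assumes c: "c > 0" and f: "f \<in> L2_01"
  shows "(\<lambda>n. L2_norm ((I_minus_cV c ^^ n) f)) \<longlonglongrightarrow> 0"
proof -
  have "(\<lambda>n. W 0 ((I_minus_cV c ^^ n) f)) \<longlonglongrightarrow> 0"
  proof (rule LIMSEQ_I)
    fix r :: real assume r: "r > 0"
    define e where "e = r * exp (-2 * c) / 4"
    have e0: "e > 0" unfolding e_def using r by simp
    obtain u where u: "u \<in> L2_01" "W 0 (\<lambda>t. f t - volterra u t) < e"
      using approxD[OF density[OF f] e0] by blast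
    have VuL: "volterra u \<in> L2_01" by (rule volterra_L2[OF u(1)])
    have dL: "(\<lambda>t. f t - volterra u t) \<in> L2_01" by (rule L2_diff[OF f VuL])
    obtain N where N: "\<forall>n\<ge>N. norm (W c (volterra ((I_minus_cV c ^^ n) u)) - 0) < e"
      using LIMSEQ_D[OF A_Vto0[OF u(1) c] e0] by blast
    show "\<exists>no. \<forall>n\<ge>no. norm (W 0 ((I_minus_cV c ^^ n) f) - 0) < r"
    proof (intro exI allI impI)
      fix n assume n: "N \<le> n"
      let ?P = "(I_minus_cV c ^^ n) (\<lambda>t. f t - volterra u t)" and ?Q = "(I_minus_cV c ^^ n) (volterra u)"
      have PL: "?P \<in> L2_01" by (rule An_L2[OF dL])
      have QL: "?Q \<in> L2_01" by (rule An_L2[OF VuL])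
      have "W c ((I_minus_cV c ^^ n) f) = W c (\<lambda>t. ?P t + ?Q t)"
        by (rule W_cong) (simp add: A_lin[OF f VuL])
      also have "\<dots> \<le> 2 * W c ?P + 2 * W c ?Q" by (rule W_add_le2[OF PL QL])
      also have "W c ?P \<le> W c (\<lambda>t. f t - volterra u t)" by (rule A_contr[OF dL c])
      also have "W c (\<lambda>t. f t - volterra u t) \<le> W 0 (\<lambda>t. f t - volterra u t)"
        by (rule W_mono_weight[OF dL]) (use c in simp)
      also have "W c ?Q = W c (volterra ((I_minus_cV c ^^ n) u))"
        by (rule W_cong) (simp add: A_comm[OF u(1)])
      finally have Wc: "W c ((I_minus_cV c ^^ n) f) \<le> 2 * W 0 (\<lambda>t. f t - volterra u t) + 2 * W c (volterra ((I_minus_cV c ^^ n) u))"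
        by simp
      have Wq: "W c (volterra ((I_minus_cV c ^^ n) u)) < e" using N n W_nonneg by auto
      have "W c ((I_minus_cV c ^^ n) f) < 4 * e" using Wc Wq u(2) by linarith
      have "W 0 ((I_minus_cV c ^^ n) f) \<le> exp (2 * c) * W c ((I_minus_cV c ^^ n) f)"
        by (rule W0_le_W[OF An_L2[OF f]]) (use c in simp)
      also have "\<dots> < exp (2 * c) * (4 * e)"
        using \<open>W c ((I_minus_cV c ^^ n) f) < 4 * e\<close> by simp
      also have "\<dots> = r" unfolding e_def by (simp add: exp_minus field_simps)
      finally show "norm (W 0 ((I_minus_cV c ^^ n) f) - 0) < r" using W_nonneg by simp
    qed
  qed
  then have "(\<lambda>n. sqrt (W 0 ((I_minus_cV c ^^ n) f))) \<longlonglongrightarrow> sqrt 0" by (rule tendsto_real_sqrt)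
  then show ?thesis by (simp add: L2_norm_W0)
qed

definition ehf :: "real \<Rightarrow> (real \<Rightarrow> complex) \<Rightarrow> real \<Rightarrow> complex" where
  "ehf c h s = exp (c * s) *\<^sub>R h s"

definition Phi :: "real \<Rightarrow> (real \<Rightarrow> complex) \<Rightarrow> real \<Rightarrow> complex" where
  "Phi c h t = exp (- c * t) *\<^sub>R volterra (ehf c h) t"

lemma exp_bound: fixes c t :: real assumes "t \<in> {0..1}" shows "exp (c * t) \<le> exp \<bar>c\<bar>"
proof -
  have t: "0 \<le> t" "t \<le> 1" using assms by auto
  have "c * t \<le> \<bar>c\<bar> * t" using t by (intro mult_right_mono) auto
  also have "\<dots> \<le> \<bar>c\<bar>" using t by (simp add: mult_left_le)
  finally show ?thesis by simp
qed

lemma m1_cong: "(\<And>t. t \<in> {0..1} \<Longrightarrow> f t = g t) \<Longrightarrow> m1 f = m1 g"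
  unfolding m1_def by (rule Bochner_Integration.integral_cong) auto

lemma ehf_L2: assumes h: "h \<in> L2_01" shows "ehf c h \<in> L2_01"
proof (rule L2_01I)
  have [measurable]: "h \<in> borel_measurable M" by (rule L2_meas[OF h])
  show "ehf c h \<in> borel_measurable M" unfolding ehf_def[abs_def] by measurable
  show "integrable M (\<lambda>t. (cmod (ehf c h t))\<^sup>2)"
  proof (rule Bochner_Integration.integrable_bound)
    show "integrable M (\<lambda>t. (exp \<bar>c\<bar>)^2 * (cmod (h t))^2)" using L2_sq_int[OF h] by simp
    show "(\<lambda>t. (cmod (ehf c h t))\<^sup>2) \<in> borel_measurable M" unfolding ehf_def by measurable
    show "AE t in M. norm ((cmod (ehf c h t))\<^sup>2) \<le> norm ((exp \<bar>c\<bar>)^2 * (cmod (h t))^2)"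
    proof (rule AE_I2)
      fix t assume "t \<in> space M"
      then have "exp (c * t) \<le> exp \<bar>c\<bar>" by (intro exp_bound) simp
      then have "(exp (c * t))^2 \<le> (exp \<bar>c\<bar>)^2" by (intro power_mono) auto
      then have "(exp (c * t))^2 * (cmod (h t))^2 \<le> (exp \<bar>c\<bar>)^2 * (cmod (h t))^2" by (intro mult_right_mono) auto
      then show "norm ((cmod (ehf c h t))\<^sup>2) \<le> norm ((exp \<bar>c\<bar>)^2 * (cmod (h t))^2)"
        by (simp add: ehf_def power_mult_distrib)
    qed
  qed
qed

lemma m1_ehf: assumes h: "h \<in> L2_01" shows "m1 (ehf c h) \<le> exp \<bar>c\<bar> * m1 h"
proof -
  have "m1 (ehf c h) \<le> (\<integral>t. exp \<bar>c\<bar> * cmod (h t) \<partial>M)" unfolding m1_def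
  proof (rule integral_mono)
    show "integrable M (\<lambda>t. cmod (ehf c h t))" by (rule L2_norm_int[OF ehf_L2[OF h]])
    show "integrable M (\<lambda>t. exp \<bar>c\<bar> * cmod (h t))" using L2_norm_int[OF h] by simp
    fix t assume "t \<in> space M"
    then have "exp (c * t) \<le> exp \<bar>c\<bar>" by (intro exp_bound) simp
    then show "cmod (ehf c h t) \<le> exp \<bar>c\<bar> * cmod (h t)" unfolding ehf_def by (simp add: mult_right_mono)
  qed
  also have "\<dots> = exp \<bar>c\<bar> * m1 h" by (rule m1_int_const)
  finally show ?thesis .
qed

lemma Phi_bound: assumes h: "h \<in> L2_01" and t: "t \<in> {0..1}"
  shows "cmod (Phi c h t) \<le> exp \<bar>c\<bar> * (exp \<bar>c\<bar> * m1 h)"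
proof -
  have e1: "exp (- c * t) \<le> exp \<bar>c\<bar>" using exp_bound[OF t, of "-c"] by simp
  have e2: "cmod (volterra (ehf c h) t) \<le> exp \<bar>c\<bar> * m1 h"
  proof -
    have "t \<le> 1" using t by simp
    then have "cmod (volterra (ehf c h) t) \<le> m1 (ehf c h)"
      by (rule volterra_norm_le[OF L2_integrable[OF ehf_L2[OF h, of c]]])
    then show ?thesis using m1_ehf[OF h, of c] by linarith
  qed
  have "cmod (Phi c h t) = exp (- c * t) * cmod (volterra (ehf c h) t)" unfolding Phi_def by simp
  also have "\<dots> \<le> exp \<bar>c\<bar> * (exp \<bar>c\<bar> * m1 h)" using e1 e2 by (intro mult_mono) auto
  finally show ?thesis .
qed

lemma Phi_cont: assumes h: "h \<in> L2_01" shows "continuous_on {0..1} (Phi c h)"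
proof -
  have "continuous_on {0..1} (volterra (ehf c h))" by (rule volterra_cont[OF L2_integrable[OF ehf_L2[OF h]]])
  then show ?thesis unfolding Phi_def[abs_def] by (intro continuous_intros)
qed

lemma Phi_L2: assumes h: "h \<in> L2_01" shows "Phi c h \<in> L2_01"
  by (rule L2_bounded[OF cont_meas_M[OF Phi_cont[OF h]] Phi_bound[OF h]])

lemma ehf_diff: "ehf c (\<lambda>s. h1 s - h2 s) = (\<lambda>s. ehf c h1 s - ehf c h2 s)"
  unfolding ehf_def by (rule ext) (simp add: scaleR_diff_right)

lemma Phi_diff: assumes h1: "h1 \<in> L2_01" and h2: "h2 \<in> L2_01" and t: "t \<le> 1"
  shows "Phi c h1 t - Phi c h2 t = Phi c (\<lambda>s. h1 s - h2 s) t"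
proof -
  have "volterra (ehf c (\<lambda>s. h1 s - h2 s)) t = volterra (ehf c h1) t - volterra (ehf c h2) t"
    unfolding ehf_diff by (rule volterra_diff[OF L2_integrable[OF ehf_L2[OF h1]] L2_integrable[OF ehf_L2[OF h2]] t])
  then show ?thesis unfolding Phi_def by (simp add: scaleR_diff_right)
qed

lemma Phi_cont_case: assumes hc: "continuous_on {0..1} h" and t: "t \<in> {0..1}"
  shows "Phi c h t = volterra h t - complex_of_real c * volterra (Phi c h) t"
proof -
  have ec: "continuous_on {0..1} (ehf c h)" unfolding ehf_def[abs_def] using hc by (intro continuous_intros)
  define \<psi> where "\<psi> = volterra (ehf c h)"
  have \<psi>c: "continuous_on {0..1} \<psi>" unfolding \<psi>_def by (rule volterra_cont[OF cont_integrable_M[OF ec]])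
  have Phi_eq: "Phi c h = (\<lambda>x. exp (- c * x) *\<^sub>R \<psi> x)" unfolding Phi_def[abs_def] \<psi>_def ..
  have Pc: "continuous_on {0..1} (Phi c h)" unfolding Phi_eq using \<psi>c by (intro continuous_intros)
  have dP: "(Phi c h has_vector_derivative (h x - complex_of_real c * Phi c h x)) (at x within {0..1})"
    if x: "x \<in> {0..1}" for x
  proof -
    have d\<psi>: "(\<psi> has_vector_derivative ehf c h x) (at x within {0..1})"
      unfolding \<psi>_def by (rule volterra_deriv[OF ec x])
    have de: "((\<lambda>x. exp (- c * x)) has_field_derivative (- c * exp (- c * x))) (at x within {0..1})"
      by (auto intro!: derivative_eq_intros)
    have "((\<lambda>x. exp (- c * x) *\<^sub>R \<psi> x) has_vector_derivative
        (exp (- c * x) *\<^sub>R ehf c h x + (- c * exp (- c * x)) *\<^sub>R \<psi> x)) (at x within {0..1})"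
      by (rule has_vector_derivative_scaleR[OF de d\<psi>])
    moreover have "exp (- c * x) *\<^sub>R ehf c h x + (- c * exp (- c * x)) *\<^sub>R \<psi> x = h x - complex_of_real c * Phi c h x"
    proof -
      have "exp (- c * x) *\<^sub>R ehf c h x = (exp (- c * x) * exp (c * x)) *\<^sub>R h x" unfolding ehf_def by simp
      also have "exp (- c * x) * exp (c * x) = 1" by (simp add: exp_add[symmetric])
      finally have a: "exp (- c * x) *\<^sub>R ehf c h x = h x" by simp
      have b: "(- c * exp (- c * x)) *\<^sub>R \<psi> x = - (complex_of_real c * Phi c h x)"
        unfolding Phi_eq by (simp add: scaleR_conv_of_real)
      show ?thesis using a b by simp
    qed
    ultimately show ?thesis unfolding Phi_eq by (rule has_vector_derivative_eq_rhs)
  qed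
  have t0: "0 \<le> t" "t \<le> 1" using t by auto
  have "((\<lambda>x. h x - complex_of_real c * Phi c h x) has_integral (Phi c h t - Phi c h 0)) {0..t}"
  proof (rule fundamental_theorem_of_calculus[OF t0(1)])
    fix x assume x: "x \<in> {0..t}"
    then have "x \<in> {0..1}" using t0 by auto
    then show "(Phi c h has_vector_derivative (h x - complex_of_real c * Phi c h x)) (at x within {0..t})"
      by (rule has_vector_derivative_within_subset[OF dP]) (use t0 in auto)
  qed
  moreover have "Phi c h 0 = 0" unfolding Phi_def using volterra_0[OF ec] by simp
  ultimately have hi: "((\<lambda>x. h x - complex_of_real c * Phi c h x) has_integral Phi c h t) {0..t}" by simp
  have gc: "continuous_on {0..1} (\<lambda>x. h x - complex_of_real c * Phi c h x)" using hc Pc by (intro continuous_intros)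
  have "volterra (\<lambda>x. h x - complex_of_real c * Phi c h x) t = integral {0..t} (\<lambda>x. h x - complex_of_real c * Phi c h x)"
    by (rule volterra_HK[OF gc t])
  also have "\<dots> = Phi c h t" using hi by (rule integral_unique)
  finally have "Phi c h t = volterra (\<lambda>x. h x - complex_of_real c * Phi c h x) t" by simp
  also have "\<dots> = volterra h t - volterra (\<lambda>x. complex_of_real c * Phi c h x) t"
    by (rule volterra_diff[OF cont_integrable_M[OF hc] _ t0(2)]) (use Pc in \<open>intro cont_integrable_M continuous_intros\<close>)
  also have "volterra (\<lambda>x. complex_of_real c * Phi c h x) t = complex_of_real c * volterra (Phi c h) t"
    by (rule volterra_scale)
  finally show ?thesis .
qed


lemma Psi_diff_bound: assumes h1: "h1 \<in> L2_01" and h2: "h2 \<in> L2_01" and t: "t \<in> {0..1}"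
  shows "cmod ((Phi c h1 t - (volterra h1 t - complex_of_real c * volterra (Phi c h1) t))
            - (Phi c h2 t - (volterra h2 t - complex_of_real c * volterra (Phi c h2) t)))
         \<le> (exp \<bar>c\<bar> * exp \<bar>c\<bar> + 1 + \<bar>c\<bar> * (exp \<bar>c\<bar> * exp \<bar>c\<bar>)) * m1 (\<lambda>s. h1 s - h2 s)"
proof -
  define d where "d = (\<lambda>s. h1 s - h2 s)"
  have dL: "d \<in> L2_01" unfolding d_def by (rule L2_diff[OF h1 h2])
  define B where "B = exp \<bar>c\<bar> * exp \<bar>c\<bar>"
  have t1: "t \<le> 1" using t by simp
  have P1: "Phi c h1 t - Phi c h2 t = Phi c d t" unfolding d_def by (rule Phi_diff[OF h1 h2 t1])
  have P1b: "cmod (Phi c d t) \<le> B * m1 d" unfolding B_def using Phi_bound[OF dL t, of c] by (simp add: mult.assoc)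
  have V1: "volterra h1 t - volterra h2 t = volterra d t" unfolding d_def
    by (rule volterra_diff[OF L2_integrable[OF h1] L2_integrable[OF h2] t1, symmetric])
  have V1b: "cmod (volterra d t) \<le> m1 d" by (rule volterra_norm_le[OF L2_integrable[OF dL] t1])
  have V2: "volterra (Phi c h1) t - volterra (Phi c h2) t = volterra (\<lambda>s. Phi c h1 s - Phi c h2 s) t"
    by (rule volterra_diff[OF L2_integrable[OF Phi_L2[OF h1]] L2_integrable[OF Phi_L2[OF h2]] t1, symmetric])
  have V2b: "cmod (volterra (\<lambda>s. Phi c h1 s - Phi c h2 s) t) \<le> B * m1 d"
  proof -
    have "cmod (volterra (\<lambda>s. Phi c h1 s - Phi c h2 s) t) \<le> m1 (\<lambda>s. Phi c h1 s - Phi c h2 s)"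
      by (rule volterra_norm_le[OF L2_integrable[OF L2_diff[OF Phi_L2[OF h1] Phi_L2[OF h2]]] t1])
    also have "m1 (\<lambda>s. Phi c h1 s - Phi c h2 s) = m1 (Phi c d)"
      by (rule m1_cong) (simp add: d_def Phi_diff[OF h1 h2])
    also have "\<dots> \<le> (\<integral>s. B * m1 d \<partial>M)" unfolding m1_def[of "Phi c d"]
    proof (rule integral_mono)
      show "integrable M (\<lambda>s. cmod (Phi c d s))" by (rule L2_norm_int[OF Phi_L2[OF dL]])
      show "integrable M (\<lambda>s. B * m1 d)" by simp
      fix s assume "s \<in> space M"
      then show "cmod (Phi c d s) \<le> B * m1 d" unfolding B_def using Phi_bound[OF dL, of s c] by (simp add: mult.assoc)
    qed
    also have "\<dots> = B * m1 d" by simp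
    finally show ?thesis .
  qed
  have eq: "(Phi c h1 t - (volterra h1 t - complex_of_real c * volterra (Phi c h1) t))
            - (Phi c h2 t - (volterra h2 t - complex_of_real c * volterra (Phi c h2) t))
          = Phi c d t - volterra d t + complex_of_real c * volterra (\<lambda>s. Phi c h1 s - Phi c h2 s) t"
    using P1 V1 V2 by (simp add: algebra_simps)
  have "cmod (Phi c d t - volterra d t + complex_of_real c * volterra (\<lambda>s. Phi c h1 s - Phi c h2 s) t)
      \<le> cmod (Phi c d t) + cmod (volterra d t) + \<bar>c\<bar> * cmod (volterra (\<lambda>s. Phi c h1 s - Phi c h2 s) t)"
    by (rule order_trans[OF norm_triangle_ineq]) (simp add: norm_mult norm_triangle_ineq4)
  also have "\<dots> \<le> B * m1 d + m1 d + \<bar>c\<bar> * (B * m1 d)"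
    using P1b V1b V2b by (intro add_mono mult_left_mono) auto
  also have "\<dots> = (B + 1 + \<bar>c\<bar> * B) * m1 d" by (simp add: algebra_simps)
  finally show ?thesis unfolding eq B_def d_def .
qed

lemma Phi_eq: assumes h: "h \<in> L2_01" and t: "t \<in> {0..1}"
  shows "Phi c h t = volterra h t - complex_of_real c * volterra (Phi c h) t"
proof (rule ccontr)
  define \<Psi> where "\<Psi> g = Phi c g t - (volterra g t - complex_of_real c * volterra (Phi c g) t)" for g
  assume "Phi c h t \<noteq> volterra h t - complex_of_real c * volterra (Phi c h) t"
  then have ne: "\<Psi> h \<noteq> 0" unfolding \<Psi>_def by simp
  define \<epsilon> where "\<epsilon> = cmod (\<Psi> h)"
  have epos: "\<epsilon> > 0" unfolding \<epsilon>_def using ne by simp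
  define K where "K = exp \<bar>c\<bar> * exp \<bar>c\<bar> + 1 + \<bar>c\<bar> * (exp \<bar>c\<bar> * exp \<bar>c\<bar>)"
  have Kpos: "K > 0" unfolding K_def by (intro add_pos_nonneg) auto
  define \<eta> where "\<eta> = \<epsilon> / (2 * K)"
  have eta: "\<eta> > 0" unfolding \<eta>_def using epos Kpos by simp
  have "\<eta>^2 > 0" using eta by simp
  then obtain u where u: "u \<in> L2_01" "W 0 (\<lambda>s. h s - volterra u s) < \<eta>^2"
    using approxD[OF density[OF h]] by blast
  have VuL: "volterra u \<in> L2_01" by (rule volterra_L2[OF u(1)])
  have Vuc: "continuous_on {0..1} (volterra u)" by (rule volterra_cont[OF L2_integrable[OF u(1)]])
  have "\<Psi> (volterra u) = 0" unfolding \<Psi>_def using Phi_cont_case[OF Vuc t, of c] by simp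
  have "m1 (\<lambda>s. h s - volterra u s) \<le> sqrt (W 0 (\<lambda>s. h s - volterra u s))" by (rule m1_le_sqrt[OF L2_diff[OF h VuL]])
  also have "\<dots> < sqrt (\<eta>^2)" using u(2) by (intro real_sqrt_less_mono)
  also have "\<dots> = \<eta>" using eta by simp
  finally have dlt: "m1 (\<lambda>s. h s - volterra u s) < \<eta>" .
  have "\<epsilon> = cmod (\<Psi> h - \<Psi> (volterra u))" unfolding \<epsilon>_def using \<open>\<Psi> (volterra u) = 0\<close> by simp
  also have "\<dots> \<le> K * m1 (\<lambda>s. h s - volterra u s)" unfolding \<Psi>_def K_def by (rule Psi_diff_bound[OF h VuL t])
  also have "\<dots> \<le> K * \<eta>" using dlt Kpos by (intro mult_left_mono) auto
  also have "\<dots> = \<epsilon> / 2" unfolding \<eta>_def using Kpos by simp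
  finally show False using epos by simp
qed

lemma exists_sol: assumes h: "h \<in> L2_01"
  shows "\<exists>g. g \<in> L2_01 \<and> (AE t in M. g t + complex_of_real c * volterra g t = h t)"
proof (intro exI conjI)
  define g where "g = (\<lambda>t. h t - complex_of_real c * Phi c h t)"
  have PL: "Phi c h \<in> L2_01" by (rule Phi_L2[OF h])
  show gL: "g \<in> L2_01" unfolding g_def by (rule L2_diff[OF h L2_scale[OF PL]])
  show "AE t in M. g t + complex_of_real c * volterra g t = h t"
  proof (rule AE_I2)
    fix t assume "t \<in> space M"
    then have t: "t \<in> {0..1}" by simp
    then have t1: "t \<le> 1" by simp
    have "volterra g t = volterra h t - volterra (\<lambda>x. complex_of_real c * Phi c h x) t"
      unfolding g_def by (rule volterra_diff[OF L2_integrable[OF h] L2_integrable[OF L2_scale[OF PL]] t1])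
    also have "volterra (\<lambda>x. complex_of_real c * Phi c h x) t = complex_of_real c * volterra (Phi c h) t"
      by (rule volterra_scale)
    also have "volterra h t - complex_of_real c * volterra (Phi c h) t = Phi c h t"
      using Phi_eq[OF h t, of c] by simp
    finally have "volterra g t = Phi c h t" .
    then show "g t + complex_of_real c * volterra g t = h t" unfolding g_def by simp
  qed
qed

lemma T_prop: assumes h: "h \<in> L2_01"
  shows "I_plus_cV_inv c h \<in> L2_01 \<and> (AE t in M. I_plus_cV_inv c h t + complex_of_real c * volterra (I_plus_cV_inv c h) t = h t)"
  unfolding I_plus_cV_inv_def by (rule someI_ex[OF exists_sol[OF h]])

lemma T_L2: "h \<in> L2_01 \<Longrightarrow> I_plus_cV_inv c h \<in> L2_01"
  using T_prop by blast

lemma T_AE: "h \<in> L2_01 \<Longrightarrow> AE t in M. I_plus_cV_inv c h t + complex_of_real c * volterra (I_plus_cV_inv c h) t = h t"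
  using T_prop by blast

lemma Tn_L2: "f \<in> L2_01 \<Longrightarrow> (I_plus_cV_inv c ^^ n) f \<in> L2_01"
  by (induction n) (simp_all add: T_L2)

lemma energy: assumes x: "x \<in> L2_01" and y: "y \<in> L2_01" and c: "c \<ge> 0"
  and ae: "AE t in M. x t + complex_of_real c * volterra x t = y t"
  shows "W 0 x + c^2 * W 0 (volterra x) \<le> W 0 y"
proof -
  have xy: "(\<lambda>t. x t + complex_of_real c * volterra x t) \<in> L2_01"
    by (rule L2_add[OF x L2_scale[OF volterra_L2[OF x]]])
  have "W 0 (\<lambda>t. x t + complex_of_real c * volterra x t) = W 0 y"
    by (rule W_cong_AE[OF L2_meas[OF xy] L2_meas[OF y] ae])
  then show ?thesis using step_plus[OF x c] by simp
qed

lemma T_step: assumes f: "f \<in> L2_01" and c: "c \<ge> 0"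
  shows "W 0 (I_plus_cV_inv c f) + c^2 * W 0 (volterra (I_plus_cV_inv c f)) \<le> W 0 f"
  by (rule energy[OF T_L2[OF f] f c T_AE[OF f]])

lemma T_tele: assumes f: "f \<in> L2_01" and c: "c \<ge> 0"
  shows "W 0 ((I_plus_cV_inv c ^^ n) f) + c^2 * (\<Sum>k<n. W 0 (volterra ((I_plus_cV_inv c ^^ Suc k) f))) \<le> W 0 f"
proof (induction n)
  case 0 then show ?case by simp
next
  case (Suc n)
  have "W 0 ((I_plus_cV_inv c ^^ Suc n) f) + c^2 * (\<Sum>k<Suc n. W 0 (volterra ((I_plus_cV_inv c ^^ Suc k) f)))
      = (W 0 (I_plus_cV_inv c ((I_plus_cV_inv c ^^ n) f)) + c^2 * W 0 (volterra (I_plus_cV_inv c ((I_plus_cV_inv c ^^ n) f))))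
        + c^2 * (\<Sum>k<n. W 0 (volterra ((I_plus_cV_inv c ^^ Suc k) f)))"
    by (simp add: algebra_simps)
  also have "\<dots> \<le> W 0 ((I_plus_cV_inv c ^^ n) f) + c^2 * (\<Sum>k<n. W 0 (volterra ((I_plus_cV_inv c ^^ Suc k) f)))"
    using T_step[OF Tn_L2[OF f] c, of n] by simp
  also have "\<dots> \<le> W 0 f" by (rule Suc.IH)
  finally show ?case .
qed

lemma T_Vto0: assumes f: "f \<in> L2_01" and c: "c > 0"
  shows "(\<lambda>k. W 0 (volterra ((I_plus_cV_inv c ^^ k) f))) \<longlonglongrightarrow> 0"
proof -
  have c0: "c \<ge> 0" using c by simp
  have "(\<lambda>k. W 0 (volterra ((I_plus_cV_inv c ^^ Suc k) f))) \<longlonglongrightarrow> 0"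
  proof (rule summable_LIMSEQ_zero)
    show "summable (\<lambda>k. W 0 (volterra ((I_plus_cV_inv c ^^ Suc k) f)))"
    proof (rule summableI_nonneg_bounded)
      show "0 \<le> W 0 (volterra ((I_plus_cV_inv c ^^ Suc k) f))" for k by (rule W_nonneg)
      fix n
      have "c^2 * (\<Sum>k<n. W 0 (volterra ((I_plus_cV_inv c ^^ Suc k) f))) \<le> W 0 f"
        using T_tele[OF f c0, of n] W_nonneg[of 0 "(I_plus_cV_inv c ^^ n) f"] by linarith
      then show "(\<Sum>k<n. W 0 (volterra ((I_plus_cV_inv c ^^ Suc k) f))) \<le> W 0 f / c^2"
        using c by (simp add: field_simps mult.commute)
    qed
  qed
  then show ?thesis by (rule LIMSEQ_imp_Suc)
qed

lemma W0_zero_AE: assumes x: "x \<in> L2_01" and "W 0 x \<le> 0" shows "AE t in M. x t = 0"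
proof -
  have "W 0 x = 0" using assms(2) W_nonneg[of 0 x] by linarith
  then have "(\<integral>t. (cmod (x t))^2 \<partial>M) = 0" unfolding W0 .
  then have "AE t in M. (cmod (x t))^2 = 0"
    using integral_nonneg_eq_0_iff_AE[OF L2_sq_int[OF x]] by simp
  then show ?thesis by (rule AE_mp) (intro AE_I2, simp)
qed

lemma T_comm: assumes u: "u \<in> L2_01" and c: "c \<ge> 0"
  shows "AE t in M. (I_plus_cV_inv c ^^ n) (volterra u) t = volterra ((I_plus_cV_inv c ^^ n) u) t"
proof (induction n)
  case 0 then show ?case by simp
next
  case (Suc n)
  let ?T = "I_plus_cV_inv c"
  define a where "a = (?T ^^ n) (volterra u)"
  define b where "b = (?T ^^ n) u"
  define a' where "a' = ?T a"
  define b' where "b' = ?T b"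
  have aL: "a \<in> L2_01" unfolding a_def by (rule Tn_L2[OF volterra_L2[OF u]])
  have bL: "b \<in> L2_01" unfolding b_def by (rule Tn_L2[OF u])
  have a'L: "a' \<in> L2_01" unfolding a'_def by (rule T_L2[OF aL])
  have b'L: "b' \<in> L2_01" unfolding b'_def by (rule T_L2[OF bL])
  have Vb'L: "volterra b' \<in> L2_01" by (rule volterra_L2[OF b'L])
  have ea: "AE t in M. a' t + complex_of_real c * volterra a' t = a t" unfolding a'_def by (rule T_AE[OF aL])
  have eb: "AE t in M. b' t + complex_of_real c * volterra b' t = b t" unfolding b'_def by (rule T_AE[OF bL])
  have IH: "AE t in M. a t = volterra b t" using Suc.IH unfolding a_def b_def .
  have Vb: "volterra b' t + complex_of_real c * volterra (volterra b') t = volterra b t" if t: "t \<in> {0..1}" for t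
  proof -
    have t1: "t \<le> 1" using t by simp
    have "volterra b' t + complex_of_real c * volterra (volterra b') t = volterra (\<lambda>s. b' s + complex_of_real c * volterra b' s) t"
      by (simp add: volterra_add[OF L2_integrable[OF b'L] L2_integrable[OF L2_scale[OF Vb'L]] t1] volterra_scale)
    also have "\<dots> = volterra b t"
      by (rule volterra_AE[OF L2_integrable[OF L2_add[OF b'L L2_scale[OF Vb'L]]] L2_integrable[OF bL] eb t1])
    finally show ?thesis .
  qed
  define x where "x = (\<lambda>t. a' t - volterra b' t)"
  have xL: "x \<in> L2_01" unfolding x_def by (rule L2_diff[OF a'L Vb'L])
  have aex: "AE t in M. x t + complex_of_real c * volterra x t = 0"
    using ea IH AE_space
  proof (eventually_elim)
    case (elim t)
    have t: "t \<in> {0..1}" using elim(3) by simp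
    then have t1: "t \<le> 1" by simp
    have "volterra x t = volterra a' t - volterra (volterra b') t"
      unfolding x_def by (rule volterra_diff[OF L2_integrable[OF a'L] L2_integrable[OF Vb'L] t1])
    then have "x t + complex_of_real c * volterra x t
        = (a' t + complex_of_real c * volterra a' t) - (volterra b' t + complex_of_real c * volterra (volterra b') t)"
      by (simp only:) (simp add: x_def algebra_simps)
    also have "\<dots> = a t - volterra b t" using elim(1) Vb[OF t] by simp
    also have "\<dots> = 0" using elim(2) by simp
    finally show ?case .
  qed
  have "W 0 x + c^2 * W 0 (volterra x) \<le> W 0 (\<lambda>t. 0)" by (rule energy[OF xL L2_zero c aex])
  moreover have "W 0 (\<lambda>t. 0) = 0" by (simp add: W_def)
  moreover have "0 \<le> c^2 * W 0 (volterra x)" by (intro mult_nonneg_nonneg W_nonneg zero_le_power2)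
  ultimately have "W 0 x \<le> 0" by linarith
  then have "AE t in M. x t = 0" by (rule W0_zero_AE[OF xL])
  then show ?case by (rule AE_mp) (intro AE_I2, simp add: x_def a'_def b'_def a_def b_def)
qed

lemma T_diff_contr: assumes f1: "f1 \<in> L2_01" and f2: "f2 \<in> L2_01" and c: "c \<ge> 0"
  shows "W 0 (\<lambda>t. (I_plus_cV_inv c ^^ n) f1 t - (I_plus_cV_inv c ^^ n) f2 t) \<le> W 0 (\<lambda>t. f1 t - f2 t)"
proof (induction n)
  case 0 then show ?case by simp
next
  case (Suc n)
  let ?T = "I_plus_cV_inv c"
  define a1 where "a1 = (?T ^^ n) f1"
  define a2 where "a2 = (?T ^^ n) f2"
  have a1L: "a1 \<in> L2_01" unfolding a1_def by (rule Tn_L2[OF f1])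
  have a2L: "a2 \<in> L2_01" unfolding a2_def by (rule Tn_L2[OF f2])
  have b1L: "?T a1 \<in> L2_01" by (rule T_L2[OF a1L])
  have b2L: "?T a2 \<in> L2_01" by (rule T_L2[OF a2L])
  define x where "x = (\<lambda>t. ?T a1 t - ?T a2 t)"
  have xL: "x \<in> L2_01" unfolding x_def by (rule L2_diff[OF b1L b2L])
  have aex: "AE t in M. x t + complex_of_real c * volterra x t = a1 t - a2 t"
    using T_AE[OF a1L, of c] T_AE[OF a2L, of c] AE_space
  proof (eventually_elim)
    case (elim t)
    have t1: "t \<le> 1" using elim(3) by simp
    have "volterra x t = volterra (?T a1) t - volterra (?T a2) t"
      unfolding x_def by (rule volterra_diff[OF L2_integrable[OF b1L] L2_integrable[OF b2L] t1])
    then have "x t + complex_of_real c * volterra x t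
       = (?T a1 t + complex_of_real c * volterra (?T a1) t) - (?T a2 t + complex_of_real c * volterra (?T a2) t)"
      by (simp only:) (simp add: x_def algebra_simps)
    also have "\<dots> = a1 t - a2 t" using elim(1,2) by simp
    finally show ?case .
  qed
  have "W 0 x + c^2 * W 0 (volterra x) \<le> W 0 (\<lambda>t. a1 t - a2 t)" by (rule energy[OF xL L2_diff[OF a1L a2L] c aex])
  moreover have "0 \<le> c^2 * W 0 (volterra x)" by (intro mult_nonneg_nonneg W_nonneg zero_le_power2)
  ultimately have "W 0 x \<le> W 0 (\<lambda>t. a1 t - a2 t)" by linarith
  also have "\<dots> \<le> W 0 (\<lambda>t. f1 t - f2 t)" using Suc.IH unfolding a1_def a2_def .
  finally show ?case unfolding x_def a1_def a2_def by simp
qed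

theorem part2: assumes c: "c > 0" and f: "f \<in> L2_01"
  shows "(\<lambda>n. L2_norm ((I_plus_cV_inv c ^^ n) f)) \<longlonglongrightarrow> 0"
proof -
  have c0: "c \<ge> 0" using c by simp
  have "(\<lambda>n. W 0 ((I_plus_cV_inv c ^^ n) f)) \<longlonglongrightarrow> 0"
  proof (rule LIMSEQ_I)
    fix r :: real assume r: "r > 0"
    define e where "e = r / 4"
    have e0: "e > 0" unfolding e_def using r by simp
    obtain u where u: "u \<in> L2_01" "W 0 (\<lambda>t. f t - volterra u t) < e"
      using approxD[OF density[OF f] e0] by blast
    have VuL: "volterra u \<in> L2_01" by (rule volterra_L2[OF u(1)])
    obtain N where N: "\<forall>n\<ge>N. norm (W 0 (volterra ((I_plus_cV_inv c ^^ n) u)) - 0) < e"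
      using LIMSEQ_D[OF T_Vto0[OF u(1) c] e0] by blast
    show "\<exists>no. \<forall>n\<ge>no. norm (W 0 ((I_plus_cV_inv c ^^ n) f) - 0) < r"
    proof (intro exI allI impI)
      fix n assume n: "N \<le> n"
      let ?P = "\<lambda>t. (I_plus_cV_inv c ^^ n) f t - (I_plus_cV_inv c ^^ n) (volterra u) t"
      let ?Q = "(I_plus_cV_inv c ^^ n) (volterra u)"
      have PL: "?P \<in> L2_01" by (rule L2_diff[OF Tn_L2[OF f] Tn_L2[OF VuL]])
      have QL: "?Q \<in> L2_01" by (rule Tn_L2[OF VuL])
      have "W 0 ((I_plus_cV_inv c ^^ n) f) = W 0 (\<lambda>t. ?P t + ?Q t)" by simp
      also have "\<dots> \<le> 2 * W 0 ?P + 2 * W 0 ?Q" by (rule W_add_le2[OF PL QL])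
      also have "W 0 ?P \<le> W 0 (\<lambda>t. f t - volterra u t)" by (rule T_diff_contr[OF f VuL c0])
      also have "W 0 ?Q = W 0 (volterra ((I_plus_cV_inv c ^^ n) u))"
        by (rule W_cong_AE[OF L2_meas[OF QL] L2_meas[OF volterra_L2[OF Tn_L2[OF u(1)]]] T_comm[OF u(1) c0]])
      finally have Wc: "W 0 ((I_plus_cV_inv c ^^ n) f) \<le> 2 * W 0 (\<lambda>t. f t - volterra u t) + 2 * W 0 (volterra ((I_plus_cV_inv c ^^ n) u))"
        by simp
      have Wq: "W 0 (volterra ((I_plus_cV_inv c ^^ n) u)) < e" using N n W_nonneg by auto
      have "W 0 ((I_plus_cV_inv c ^^ n) f) < r" using Wc Wq u(2) unfolding e_def by linarith
      then show "norm (W 0 ((I_plus_cV_inv c ^^ n) f) - 0) < r" using W_nonneg by simp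
    qed
  qed
  then have "(\<lambda>n. sqrt (W 0 ((I_plus_cV_inv c ^^ n) f))) \<longlonglongrightarrow> sqrt 0" by (rule tendsto_real_sqrt)
  then show ?thesis by (simp add: L2_norm_W0)
qed

theorem lemma2p6:
  fixes c :: real and f :: "real \<Rightarrow> complex"
  assumes "c > 0" and "f \<in> L2_01"
  shows "((\<lambda>n. L2_norm ((I_minus_cV c ^^ n) f)) \<longlonglongrightarrow> 0) \<and>
         ((\<lambda>n. L2_norm ((I_plus_cV_inv c ^^ n) f)) \<longlonglongrightarrow> 0)"
  using part1[OF assms] part2[OF assms] by blast

end
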